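(* Let $\{X^{(k)}\}_{k\ge 0}$ be an irreducible Markov chain on a measurable state space $(\mathcal X,\mathcal B)$ with transition kernel $P$ and stationary distribution $\pi$. Let $R_0\in\mathcal B$ (the "large set") and suppose the chain satisfies the generalized drift condition on $R_0$: there are a measurable $f:\mathcal X\to[0,\infty)$, $0<\lambda<1$ and $0\le b<\infty$ such that $$\mathbb E\big(f(X^{(1)})\mid X^{(0)}=x\big)\le \lambda f(x)+b\qquad\forall x\in R_0,$$ and at least one of (C1), (C1') holds: (C1) $R_0=\{x\in\mathcal X: f(x)\le d_0\}$ for some $d_0>0$; (C1') $P=P_1P_2\cdots P_I$ for a fixed integer $I\ge1$ and kernels $P_i$ that are each reversible with respect to $\pi$ (i.e. $P(x,dy)=\int P_1(x,dx_1)P_2(x_1,dx_2)\cdots P_I(x_{I-1},dy)$), and $$\mathbb E\big(f(\tilde X^{(1)})\mid \tilde X^{(0)}=x\big)\le \mathbb E\big(f(X^{(1)})\mid X^{(0)}=x\big)\qquad \forall x\in R_0,$$ where $\{\tilde X^{(k)}\}$ is the Markov chain on $R_0$ with kernel $\tilde P=\tilde P_1\cdots\tilde P_I$, with $\tilde P_i(x,dy):=P_i(x,dy)$ for $x,y\in R_0$, $y\neq x$, and $\tilde P_i(x,\{x\}):=1-P_i(x,R_0\setminus\{x\})$ for $x\in R_0$. Suppose further that for some $d>2b/(1-\lambda)$, with $R:=\{x\in\mathcal X:f(x)\le d\}$, there exist $\epsilon>0$ and a probability measure $Q$ on $\mathcal X$ with $P(x,\cdot)\ge\epsilon Q(\cdot)$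 for all $x\in R$. Let the chain start from an initial distribution $\nu$ with $\nu(R_0)=1$. Set $\alpha^{-1}=\frac{1+2b+\lambda d}{1+d}$ and $\Lambda=1+2(\lambda d+b)$. Then for every $0<r<1$ and every positive integer $k$ such that $rk$ is an integer, $$\|\mathcal L(X^{(k)})-\pi\|_{\mathrm{TV}}\le (1-\epsilon Q(R_0))^{rk}+\frac{(\alpha\Lambda)^{rk}\Big[1+\mathbb E_\nu[f]+\frac{b}{1-\lambda}\Big]-\alpha^{rk}}{\alpha^k-\alpha^{rk}}+k\,\pi(R_0^c)+\sum_{i=1}^k P^i(\nu,R_0^c).$$
   Context: $\|\mu_1-\mu_2\|_{\mathrm{TV}}=\sup_{B\in\mathcal B}|\mu_1(B)-\mu_2(B)|$; $\mathcal L(X^{(k)})$ is the law of $X^{(k)}$; $P^i$ is the $i$-step kernel and $P^i(\nu,B)=\int\nu(dx)P^i(x,B)$; $\mathbb E_\nu[f]=\int f\,d\nu$; $R_0^c=\mathcal X\setminus R_0$. Note $d>2b/(1-\lambda)$ implies $\alpha>1$. *)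

theory Defs
  imports "HOL-Probability.Probability"
begin

definition kstep :: "('a \<Rightarrow> 'a measure) \<Rightarrow> nat \<Rightarrow> 'a measure \<Rightarrow> 'a measure" where
  "kstep P n \<nu> = ((\<lambda>\<mu>. \<mu> \<bind> P) ^^ n) \<nu>"

definition tv_dist :: "'a measure \<Rightarrow> 'a measure \<Rightarrow> 'a measure \<Rightarrow> real" where
  "tv_dist M \<mu>1 \<mu>2 = (SUP B\<in>sets M. \<bar>measure \<mu>1 B - measure \<mu>2 B\<bar>)"

definition irreducible_kernel :: "'a measure \<Rightarrow> ('a \<Rightarrow> 'a measure) \<Rightarrow> bool" where
  "irreducible_kernel M P \<longleftrightarrow>
     (\<exists>\<phi>. sets \<phi> = sets M \<and> sigma_finite_measure \<phi> \<and> emeasure \<phi> (space M) > 0 \<and>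
        (\<forall>A\<in>sets M. emeasure \<phi> A > 0 \<longrightarrow>
           (\<forall>x\<in>space M. \<exists>n>0. emeasure (kstep P n (return M x)) A > 0)))"

definition reversible_kernel :: "'a measure \<Rightarrow> 'a measure \<Rightarrow> ('a \<Rightarrow> 'a measure) \<Rightarrow> bool" where
  "reversible_kernel M \<pi> K \<longleftrightarrow>
     (\<forall>A\<in>sets M. \<forall>B\<in>sets M.
        (\<integral>\<^sup>+x\<in>A. emeasure (K x) B \<partial>\<pi>) = (\<integral>\<^sup>+x\<in>B. emeasure (K x) A \<partial>\<pi>))"

fun kcomp :: "'a measure \<Rightarrow> ('a \<Rightarrow> 'a measure) list \<Rightarrow> 'a \<Rightarrow> 'a measure" where
  "kcomp M [] = return M"
| "kcomp M (K # Ks) = (\<lambda>x. K x \<bind> kcomp M Ks)"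

text \<open>The truncated kernel on R0: moves of K from x \<in> R0 to y \<in> R0, y \<noteq> x are kept,
  all remaining mass is put on x.  (Outside R0 it is irrelevant; we let it stay put.)\<close>
definition trunc_kernel :: "'a measure \<Rightarrow> 'a set \<Rightarrow> ('a \<Rightarrow> 'a measure) \<Rightarrow> 'a \<Rightarrow> 'a measure" where
  "trunc_kernel M R0 K x =
     (if x \<in> R0 then
        measure_of (space M) (sets M)
          (\<lambda>A. emeasure (K x) (A \<inter> (R0 - {x})) +
               (if x \<in> A then 1 - emeasure (K x) (R0 - {x}) else 0))
      else return M x)"

end

theory Submission
  imports Defs
begin


lemma kstep_Suc: "kstep K (Suc n) \<mu> = kstep K n \<mu> \<bind> K"
  by (simp add: kstep_def)

lemma kstep_0[simp]: "kstep K 0 \<mu> = \<mu>"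
  by (simp add: kstep_def)

lemma kstep_space:
  assumes K: "K \<in> N \<rightarrow>\<^sub>M prob_algebra N" and mu: "\<mu> \<in> space (prob_algebra N)"
  shows "kstep K n \<mu> \<in> space (prob_algebra N)"
proof (induction n)
  case 0 then show ?case using mu by simp
next
  case (Suc n)
  show ?case unfolding kstep_Suc space_prob_algebra
    using sets_bind'[OF Suc K] prob_space_bind'[OF Suc K] by simp
qed

lemma kstep_stat:
  assumes K: "K \<in> N \<rightarrow>\<^sub>M prob_algebra N" and st: "\<mu> \<bind> K = \<mu>"
  shows "kstep K n \<mu> = \<mu>"
  by (induction n) (simp_all add: kstep_Suc st)




lemma ca_sum_point:
  assumes N: "sets N = sets M" and B: "B \<in> sets M"
  shows "countably_additive (sets M) (\<lambda>A. emeasure N (A \<inter> B) + (if x \<in> A then c else 0))"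
proof (rule countably_additiveI)
  fix F :: "nat \<Rightarrow> 'a set"
  assume F: "range F \<subseteq> sets M" "disjoint_family F" "(\<Union>i. F i) \<in> sets M"
  have d2: "disjoint_family (\<lambda>i. F i \<inter> B)" using F(2) by (auto simp: disjoint_family_on_def)
  have r2: "range (\<lambda>i. F i \<inter> B) \<subseteq> sets N" using F(1) B N by auto
  have s1: "(\<Sum>i. emeasure N (F i \<inter> B)) = emeasure N ((\<Union>i. F i) \<inter> B)"
    using suminf_emeasure[OF r2 d2] by simp
  have s2: "(\<Sum>i. (if x \<in> F i then c else 0)) = (if x \<in> (\<Union>i. F i) then c else 0)"
  proof -
    have "(\<Sum>i. (if x \<in> F i then c else 0)) = (\<Sum>i. c * indicator (F i) x)"
      by (intro suminf_cong) (simp split: split_indicator)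
    also have "\<dots> = c * (\<Sum>i. indicator (F i) x)" by (rule ennreal_suminf_cmult)
    also have "\<dots> = c * indicator (\<Union>i. F i) x" by (simp add: suminf_indicator[OF F(2)])
    finally show ?thesis by (simp split: split_indicator)
  qed
  show "(\<Sum>i. emeasure N (F i \<inter> B) + (if x \<in> F i then c else 0)) =
        emeasure N ((\<Union>i. F i) \<inter> B) + (if x \<in> (\<Union>i. F i) then c else 0)"
    by (subst suminf_add[symmetric]) (auto simp: s1 s2)
qed

lemma one_minus_ennreal: "0 \<le> p \<Longrightarrow> 1 - ennreal p = ennreal (1 - p)"
  by (metis ennreal_1 ennreal_minus)

locale trc =
  fixes M :: "'a measure" and \<pi> :: "'a measure" and R0 :: "'a set" and K :: "'a \<Rightarrow> 'a measure"
  assumes K_kernel: "K \<in> M \<rightarrow>\<^sub>M prob_algebra M"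
    and R0_meas: "R0 \<in> sets M"
    and single: "\<forall>x\<in>space M. {x} \<in> sets M"
begin

abbreviation "T \<equiv> trunc_kernel M R0 K"

lemma R0_sub: "R0 \<subseteq> space M" using R0_meas sets.sets_into_space by auto

lemma K_facts: "x \<in> space M \<Longrightarrow> sets (K x) = sets M \<and> prob_space (K x)"
  using measurable_space[OF K_kernel] by (simp add: space_prob_algebra)

lemma T_emeasure0:
  assumes x: "x \<in> R0" and A: "A \<in> sets M"
  shows "emeasure (T x) A = emeasure (K x) (A \<inter> (R0 - {x})) + (if x \<in> A then 1 - emeasure (K x) (R0 - {x}) else 0)"
proof -
  have xs: "x \<in> space M" using x R0_sub by auto
  have B: "R0 - {x} \<in> sets M" using R0_meas single xs by auto
  have pos: "positive (sets M) (\<lambda>A. emeasure (K x) (A \<inter> (R0 - {x})) + (if x \<in> A then 1 - emeasure (K x) (R0 - {x}) else 0))"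
    by (simp add: positive_def)
  show ?thesis unfolding trunc_kernel_def using x
    by (simp add: emeasure_measure_of_sigma[OF sets.sigma_algebra_axioms pos ca_sum_point[OF conjunct1[OF K_facts[OF xs]] B] A])
qed

lemma T_emeasure:
  assumes x: "x \<in> R0" and A: "A \<in> sets M"
  shows "emeasure (T x) A = ennreal (measure (K x) (A \<inter> R0) + indicator A x * (1 - measure (K x) R0))"
proof -
  have xs: "x \<in> space M" using x R0_sub by auto
  interpret Kx: prob_space "K x" using K_facts[OF xs] by simp
  have sK: "sets (K x) = sets M" using K_facts[OF xs] by simp
  have B: "R0 - {x} \<in> sets M" "{x} \<in> sets M" using R0_meas single xs by auto
  have AR: "A \<inter> R0 \<in> sets M" using A R0_meas by auto
  have le1: "measure (K x) (R0 - {x}) \<le> 1" by simp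
  show ?thesis
  proof (cases "x \<in> A")
    case True
    have "A \<inter> R0 = (A \<inter> (R0 - {x})) \<union> {x}" using True x by auto
    then have m1: "measure (K x) (A \<inter> R0) = measure (K x) (A \<inter> (R0 - {x})) + measure (K x) {x}"
      using B A by (subst Kx.finite_measure_Union[symmetric]) (auto simp: sK)
    have "R0 = (R0 - {x}) \<union> {x}" using x by auto
    then have m2: "measure (K x) R0 = measure (K x) (R0 - {x}) + measure (K x) {x}"
      using B by (subst Kx.finite_measure_Union[symmetric]) (auto simp: sK)
    have "emeasure (T x) A = ennreal (measure (K x) (A \<inter> (R0 - {x}))) + ennreal (1 - measure (K x) (R0 - {x}))"
      using True A B by (simp add: T_emeasure0[OF x A] Kx.emeasure_eq_measure sK one_minus_ennreal)
    also have "\<dots> = ennreal (measure (K x) (A \<inter> (R0 - {x})) + (1 - measure (K x) (R0 - {x})))"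
      using le1 by (intro ennreal_plus[symmetric]) auto
    also have "measure (K x) (A \<inter> (R0 - {x})) + (1 - measure (K x) (R0 - {x}))
        = measure (K x) (A \<inter> R0) + indicator A x * (1 - measure (K x) R0)"
      using True m1 m2 by simp
    finally show ?thesis .
  next
    case False
    then have "A \<inter> (R0 - {x}) = A \<inter> R0" by auto
    then show ?thesis using False by (simp add: T_emeasure0[OF x A] Kx.emeasure_eq_measure)
  qed
qed

lemma T_sets[simp]: "sets (T x) = sets M"
  by (simp add: trunc_kernel_def)

lemma T_prob: assumes xs: "x \<in> space M" shows "prob_space (T x)"
proof (cases "x \<in> R0")
  case True
  interpret Kx: prob_space "K x" using K_facts[OF xs] by simp
  have sK: "sets (K x) = sets M" using K_facts[OF xs] by simp
  have sp: "space M \<in> sets M" by simp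
  have "space M \<inter> R0 = R0" using R0_sub by auto
  then have "emeasure (T x) (space M) = 1"
    using True R0_sub xs by (simp add: T_emeasure[OF True sp])
  then show ?thesis by (intro prob_spaceI) (simp add: sets_eq_imp_space_eq[OF T_sets])
next
  case False then show ?thesis using xs by (simp add: trunc_kernel_def prob_space_return)
qed

lemma T_kernel: "T \<in> M \<rightarrow>\<^sub>M prob_algebra M"
proof (rule measurable_prob_algebra_generated[where \<Omega>="space M" and G="sets M"])
  show "sets M = sigma_sets (space M) (sets M)" by (simp add: sets.sigma_sets_eq)
  show "Int_stable (sets M)" by (auto simp: Int_stable_def)
  show "sets M \<subseteq> Pow (space M)" using sets.space_closed by auto
  show "\<And>a. a \<in> space M \<Longrightarrow> prob_space (T a)" by (rule T_prob)
  show "\<And>a. a \<in> space M \<Longrightarrow> sets (T a) = sets M" by simp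
  fix A assume A: "A \<in> sets M"
  have AR: "A \<inter> R0 \<in> sets M" using A R0_meas by auto
  have m1: "(\<lambda>x. measure (K x) (A \<inter> R0)) \<in> borel_measurable M"
    using measurable_compose[OF K_kernel measurable_measure_prob_algebra[OF AR]] by simp
  have m2: "(\<lambda>x. measure (K x) R0) \<in> borel_measurable M"
    using measurable_compose[OF K_kernel measurable_measure_prob_algebra[OF R0_meas]] by simp
  have "(\<lambda>x. emeasure (T x) A) \<in> borel_measurable M \<longleftrightarrow>
     (\<lambda>x. if x \<in> R0 then ennreal (measure (K x) (A \<inter> R0) + indicator A x * (1 - measure (K x) R0))
          else indicator A x) \<in> borel_measurable M"
  proof (intro measurable_cong)
    fix w assume w: "w \<in> space M"
    show "emeasure (T w) A = (if w \<in> R0 then ennreal (measure (K w) (A \<inter> R0) + indicator A w * (1 - measure (K w) R0)) else indicator A w)"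
      using T_emeasure[OF _ A, of w] w A by (cases "w \<in> R0") (auto simp: trunc_kernel_def)
  qed
  also have "\<dots>" using m1 m2 A R0_meas by measurable
  finally show "(\<lambda>x. emeasure (T x) A) \<in> borel_measurable M" .
qed

lemma T_support: assumes x: "x \<in> R0" shows "emeasure (T x) (space M - R0) = 0"
proof -
  have "space M - R0 \<in> sets M" using R0_meas by auto
  moreover have "(space M - R0) \<inter> R0 = {}" by auto
  ultimately show ?thesis using x by (simp add: T_emeasure)
qed


lemma T_stat:
  assumes pi_sets: "sets \<pi> = sets M" and rev: "reversible_kernel M \<pi> K"
  shows "density \<pi> (indicator R0) \<bind> T = density \<pi> (indicator R0)"
proof -
  let ?mu = "density \<pi> (indicator R0)"
  have smu: "sets ?mu = sets M" using pi_sets by simp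
  have sppi: "space \<pi> = space M" by (rule sets_eq_imp_space_eq[OF pi_sets])
  have Tm: "T \<in> ?mu \<rightarrow>\<^sub>M subprob_algebra M"
    using measurable_prob_algebraD[OF T_kernel] by (simp add: measurable_cong_sets[OF smu refl])
  have ind_m: "indicator R0 \<in> borel_measurable \<pi>" using R0_meas pi_sets by simp
  show ?thesis
  proof (cases "space M = {}")
    case True
    then have "space ?mu = {}" using smu sets_eq_imp_space_eq by blast
    then show ?thesis by (metis bind_empty space_empty)
  next
    case ne: False
    have nemu: "space ?mu \<noteq> {}" using ne sets_eq_imp_space_eq[OF smu] by simp
    show ?thesis
    proof (rule measure_eqI)
      show "sets (?mu \<bind> T) = sets ?mu" using sets_bind[OF _ nemu, of T M] smu by simp
      fix A assume "A \<in> sets (?mu \<bind> T)"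
      then have A: "A \<in> sets M" using sets_bind[OF _ nemu, of T M] by simp
      have AR: "A \<inter> R0 \<in> sets M" using A R0_meas by auto
      have e1: "emeasure (?mu \<bind> T) A = (\<integral>\<^sup>+x. emeasure (T x) A \<partial>?mu)"
        by (rule emeasure_bind[OF nemu Tm A])
      also have "\<dots> = (\<integral>\<^sup>+x. indicator R0 x * emeasure (T x) A \<partial>\<pi>)"
      proof (rule nn_integral_density)
        show "(\<lambda>x. emeasure (T x) A) \<in> borel_measurable \<pi>"
          using measurable_compose[OF measurable_prob_algebraD[OF T_kernel] measurable_emeasure_subprob_algebra[OF A]]
          by (simp add: measurable_cong_sets[OF pi_sets refl])
      qed (use ind_m in simp_all)
      also have "\<dots> = (\<integral>\<^sup>+x. emeasure (K x) (A \<inter> R0) * indicator R0 x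
                        + ennreal (1 - measure (K x) R0) * indicator (A \<inter> R0) x \<partial>\<pi>)"
      proof (rule nn_integral_cong)
        fix x assume "x \<in> space \<pi>"
        then have xs: "x \<in> space M" by (simp add: sppi)
        interpret Kx: prob_space "K x" using K_facts[OF xs] by simp
        have sK: "sets (K x) = sets M" using K_facts[OF xs] by simp
        show "indicator R0 x * emeasure (T x) A = emeasure (K x) (A \<inter> R0) * indicator R0 x
                        + ennreal (1 - measure (K x) R0) * indicator (A \<inter> R0) x"
        proof (cases "x \<in> R0")
          case True
          have "emeasure (T x) A = ennreal (measure (K x) (A \<inter> R0)) + ennreal (indicator A x * (1 - measure (K x) R0))"
            unfolding T_emeasure[OF True A] by (rule ennreal_plus) auto
          then show ?thesis using True by (simp add: Kx.emeasure_eq_measure split: split_indicator)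
        qed simp
      qed
      also have "\<dots> = (\<integral>\<^sup>+x. emeasure (K x) (A \<inter> R0) * indicator R0 x \<partial>\<pi>)
                    + (\<integral>\<^sup>+x. ennreal (1 - measure (K x) R0) * indicator (A \<inter> R0) x \<partial>\<pi>)"
      proof (rule nn_integral_add)
        have "(\<lambda>x. emeasure (K x) (A \<inter> R0)) \<in> borel_measurable M"
          using measurable_compose[OF measurable_prob_algebraD[OF K_kernel] measurable_emeasure_subprob_algebra[OF AR]] by simp
        then show "(\<lambda>x. emeasure (K x) (A \<inter> R0) * indicator R0 x) \<in> borel_measurable \<pi>"
          using R0_meas by (simp add: measurable_cong_sets[OF pi_sets refl])
        have "(\<lambda>x. measure (K x) R0) \<in> borel_measurable M"
          using measurable_compose[OF K_kernel measurable_measure_prob_algebra[OF R0_meas]] by simp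
        then show "(\<lambda>x. ennreal (1 - measure (K x) R0) * indicator (A \<inter> R0) x) \<in> borel_measurable \<pi>"
          using AR by (simp add: measurable_cong_sets[OF pi_sets refl])
      qed
      also have "(\<integral>\<^sup>+x. emeasure (K x) (A \<inter> R0) * indicator R0 x \<partial>\<pi>) = (\<integral>\<^sup>+x. emeasure (K x) R0 * indicator (A \<inter> R0) x \<partial>\<pi>)"
        using rev R0_meas AR unfolding reversible_kernel_def by auto
      also have "(\<integral>\<^sup>+x. emeasure (K x) R0 * indicator (A \<inter> R0) x \<partial>\<pi>)
                    + (\<integral>\<^sup>+x. ennreal (1 - measure (K x) R0) * indicator (A \<inter> R0) x \<partial>\<pi>)
               = (\<integral>\<^sup>+x. emeasure (K x) R0 * indicator (A \<inter> R0) x + ennreal (1 - measure (K x) R0) * indicator (A \<inter> R0) x \<partial>\<pi>)"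
      proof (rule nn_integral_add[symmetric])
        have "(\<lambda>x. emeasure (K x) R0) \<in> borel_measurable M"
          using measurable_compose[OF measurable_prob_algebraD[OF K_kernel] measurable_emeasure_subprob_algebra[OF R0_meas]] by simp
        then show "(\<lambda>x. emeasure (K x) R0 * indicator (A \<inter> R0) x) \<in> borel_measurable \<pi>"
          using AR by (simp add: measurable_cong_sets[OF pi_sets refl])
        have "(\<lambda>x. measure (K x) R0) \<in> borel_measurable M"
          using measurable_compose[OF K_kernel measurable_measure_prob_algebra[OF R0_meas]] by simp
        then show "(\<lambda>x. ennreal (1 - measure (K x) R0) * indicator (A \<inter> R0) x) \<in> borel_measurable \<pi>"
          using AR by (simp add: measurable_cong_sets[OF pi_sets refl])
      qed
      also have "\<dots> = (\<integral>\<^sup>+x. indicator (A \<inter> R0) x \<partial>\<pi>)"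
      proof (rule nn_integral_cong)
        fix x assume "x \<in> space \<pi>"
        then have xs: "x \<in> space M" by (simp add: sppi)
        interpret Kx: prob_space "K x" using K_facts[OF xs] by simp
        have "emeasure (K x) R0 + ennreal (1 - measure (K x) R0) = 1"
          by (simp add: Kx.emeasure_eq_measure ennreal_plus[symmetric] del: ennreal_plus)
        then show "emeasure (K x) R0 * indicator (A \<inter> R0) x + ennreal (1 - measure (K x) R0) * indicator (A \<inter> R0) x
            = indicator (A \<inter> R0) x"
          by (simp add: distrib_right[symmetric])
      qed
      also have "\<dots> = emeasure \<pi> (A \<inter> R0)" using AR pi_sets by simp
      also have "\<dots> = emeasure ?mu A"
      proof -
        have "emeasure ?mu A = (\<integral>\<^sup>+x. indicator R0 x * indicator A x \<partial>\<pi>)"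
          by (rule emeasure_density[OF ind_m]) (simp add: A pi_sets)
        also have "\<dots> = (\<integral>\<^sup>+x. indicator (A \<inter> R0) x \<partial>\<pi>)"
          by (rule nn_integral_cong) (simp split: split_indicator)
        also have "\<dots> = emeasure \<pi> (A \<inter> R0)" using AR pi_sets by simp
        finally show ?thesis by simp
      qed
      finally show "emeasure (?mu \<bind> T) A = emeasure ?mu A" .
    qed
  qed
qed

end

lemma kcomp_props:
  assumes R0: "R0 \<in> sets M" and smu: "sets \<mu> = sets M"
    and G: "\<forall>G\<in>set Ts. G \<in> M \<rightarrow>\<^sub>M prob_algebra M \<and> (\<forall>x\<in>R0. emeasure (G x) (space M - R0) = 0) \<and> \<mu> \<bind> G = \<mu>"
  shows "kcomp M Ts \<in> M \<rightarrow>\<^sub>M prob_algebra M \<and> (\<forall>x\<in>R0. emeasure (kcomp M Ts x) (space M - R0) = 0) \<and> \<mu> \<bind> kcomp M Ts = \<mu>"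
  using G
proof (induction Ts)
  case Nil
  have "\<mu> \<bind> return M = \<mu>" by (rule bind_return''[OF smu])
  moreover have "\<forall>x\<in>R0. emeasure (return M x) (space M - R0) = 0"
    using R0 by (auto simp: emeasure_return)
  ultimately show ?case by simp
next
  case (Cons G Gs)
  then have IH: "kcomp M Gs \<in> M \<rightarrow>\<^sub>M prob_algebra M" "\<forall>x\<in>R0. emeasure (kcomp M Gs x) (space M - R0) = 0"
      "\<mu> \<bind> kcomp M Gs = \<mu>" by auto
  have Gk: "G \<in> M \<rightarrow>\<^sub>M prob_algebra M" "\<forall>x\<in>R0. emeasure (G x) (space M - R0) = 0" "\<mu> \<bind> G = \<mu>"
    using Cons.prems by auto
  have ker: "(\<lambda>x. G x \<bind> kcomp M Gs) \<in> M \<rightarrow>\<^sub>M prob_algebra M"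
    by (rule measurable_bind_prob_space[OF Gk(1) IH(1)])
  have sup: "emeasure (G x \<bind> kcomp M Gs) (space M - R0) = 0" if x: "x \<in> R0" for x
  proof -
    have xs: "x \<in> space M" using x R0 sets.sets_into_space by auto
    have Gx: "G x \<in> space (prob_algebra M)" by (rule measurable_space[OF Gk(1) xs])
    have sG: "sets (G x) = sets M" using Gx by (simp add: space_prob_algebra)
    have Rc: "space M - R0 \<in> sets M" using R0 by auto
    have "emeasure (G x \<bind> kcomp M Gs) (space M - R0) = (\<integral>\<^sup>+y. emeasure (kcomp M Gs y) (space M - R0) \<partial>G x)"
      by (rule emeasure_bind_prob_algebra[OF Gx IH(1) Rc])
    also have "\<dots> = (\<integral>\<^sup>+y. 0 \<partial>G x)"
    proof (rule nn_integral_cong_AE)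
      have "AE y in G x. y \<in> R0"
      proof (rule AE_I')
        show "space M - R0 \<in> null_sets (G x)" using Gk(2) x Rc sG by (auto simp: null_sets_def)
        show "{y \<in> space (G x). y \<notin> R0} \<subseteq> space M - R0" using sets_eq_imp_space_eq[OF sG] by auto
      qed
      then show "AE y in G x. emeasure (kcomp M Gs y) (space M - R0) = 0"
        by eventually_elim (use IH(2) in auto)
    qed
    finally show ?thesis by simp
  qed
  have "\<mu> \<bind> (\<lambda>x. G x \<bind> kcomp M Gs) = (\<mu> \<bind> G) \<bind> kcomp M Gs"
  proof (rule bind_assoc[symmetric])
    show "G \<in> \<mu> \<rightarrow>\<^sub>M subprob_algebra M"
      using measurable_prob_algebraD[OF Gk(1)] by (simp add: measurable_cong_sets[OF smu refl])
    show "kcomp M Gs \<in> M \<rightarrow>\<^sub>M subprob_algebra M" by (rule measurable_prob_algebraD[OF IH(1)])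
  qed
  also have "\<dots> = \<mu>" using Gk(3) IH(3) by simp
  finally show ?case using ker sup by simp
qed


locale c2 =
  fixes M :: "'a measure" and \<pi> :: "'a measure" and R0 :: "'a set" and f :: "'a \<Rightarrow> real"
    and lam b :: real and Tc :: "'a \<Rightarrow> 'a measure"
  assumes Tc_kernel: "Tc \<in> M \<rightarrow>\<^sub>M prob_algebra M"
    and Tc_support: "\<forall>x\<in>R0. emeasure (Tc x) (space M - R0) = 0"
    and Tc_stat: "density \<pi> (indicator R0) \<bind> Tc = density \<pi> (indicator R0)"
    and Tc_drift: "\<forall>x\<in>R0. (\<integral>\<^sup>+y. ennreal (f y) \<partial>Tc x) \<le> ennreal (lam * f x + b)"
    and R0_meas: "R0 \<in> sets M"
    and f_meas: "f \<in> borel_measurable M" and f_nonneg: "\<forall>x\<in>space M. 0 \<le> f x"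
    and lam: "0 < lam" "lam < 1" and b: "0 \<le> b"
    and pi_prob: "prob_space \<pi>" and pi_sets: "sets \<pi> = sets M"
begin

lemma R0_sub: "R0 \<subseteq> space M" using R0_meas sets.sets_into_space by auto

lemma Tc_facts: "x \<in> space M \<Longrightarrow> sets (Tc x) = sets M \<and> prob_space (Tc x)"
  using measurable_space[OF Tc_kernel] by (simp add: space_prob_algebra)

lemma AE_R0:
  assumes "sets N = sets M" "emeasure N (space M - R0) = 0"
  shows "AE y in N. y \<in> R0"
proof (rule AE_I')
  show "space M - R0 \<in> null_sets N" using assms R0_meas by (auto simp: null_sets_def)
  show "{y \<in> space N. y \<notin> R0} \<subseteq> space M - R0" using sets_eq_imp_space_eq[OF assms(1)] by auto
qed

lemma inf_prop: "\<forall>x\<in>R0. Inf (f ` R0) \<le> lam * f x + b"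
proof
  fix x assume x: "x \<in> R0"
  let ?c = "Inf (f ` R0)"
  have xs: "x \<in> space M" using x R0_sub by auto
  have bdd: "bdd_below (f ` R0)" using f_nonneg R0_sub by (auto intro!: bdd_belowI[of _ 0])
  have c0: "0 \<le> ?c" using x f_nonneg R0_sub by (intro cInf_greatest) auto
  have sT: "sets (Tc x) = sets M" and pT: "prob_space (Tc x)" using Tc_facts[OF xs] by auto
  have spT: "space (Tc x) = space M" by (rule sets_eq_imp_space_eq[OF sT])
  have "ennreal ?c = (\<integral>\<^sup>+y. ennreal ?c \<partial>Tc x)"
    using prob_space.emeasure_space_1[OF pT] by simp
  also have "\<dots> \<le> (\<integral>\<^sup>+y. ennreal (f y) \<partial>Tc x)"
  proof (rule nn_integral_mono_AE)
    show "AE y in Tc x. ennreal ?c \<le> ennreal (f y)"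
      using AE_R0[OF sT Tc_support[rule_format, OF x]]
      by eventually_elim (use bdd in \<open>auto intro!: ennreal_leI cInf_lower\<close>)
  qed
  also have "\<dots> \<le> ennreal (lam * f x + b)" using Tc_drift x by auto
  finally show "?c \<le> lam * f x + b"
    using lam b f_nonneg xs by (subst (asm) ennreal_le_iff) auto
qed


definition "Kn n x = kstep Tc n (return M x)"

lemma Kn_Suc: "Kn (Suc n) x = Kn n x \<bind> Tc" by (simp add: Kn_def kstep_Suc)

lemma Kn_kernel: "Kn n \<in> M \<rightarrow>\<^sub>M prob_algebra M"
proof (induction n)
  case 0
  have "Kn 0 = return M" by (simp add: Kn_def fun_eq_iff)
  then show ?case by simp
next
  case (Suc n)
  have "Kn (Suc n) = (\<lambda>x. Kn n x \<bind> Tc)" by (simp add: Kn_Suc fun_eq_iff)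
  then show ?case using measurable_bind_prob_space[OF Suc Tc_kernel] by simp
qed

lemma Kn_facts: "x \<in> space M \<Longrightarrow> sets (Kn n x) = sets M \<and> prob_space (Kn n x)"
  using measurable_space[OF Kn_kernel] by (simp add: space_prob_algebra)

definition "BB = b / (1 - lam)"

lemma Kn_R0:
  assumes x: "x \<in> R0"
  shows "emeasure (Kn n x) (space M - R0) = 0 \<and> (\<integral>\<^sup>+y. ennreal (f y) \<partial>Kn n x) \<le> ennreal (lam ^ n * f x + BB)"
proof (induction n)
  case 0
  have xs: "x \<in> space M" using x R0_sub by auto
  have "(\<integral>\<^sup>+y. ennreal (f y) \<partial>Kn 0 x) = ennreal (f x)"
    using xs f_meas by (simp add: Kn_def nn_integral_return)
  moreover have "f x \<le> f x + BB" using b lam by (simp add: BB_def)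
  moreover have "emeasure (Kn 0 x) (space M - R0) = 0" using x R0_meas by (simp add: Kn_def emeasure_return)
  ultimately show ?case by (simp add: ennreal_leI)
next
  case (Suc n)
  have xs: "x \<in> space M" using x R0_sub by auto
  have sK: "sets (Kn n x) = sets M" and pK: "prob_space (Kn n x)" using Kn_facts[OF xs] by auto
  have KS: "Kn n x \<in> space (prob_algebra M)" using sK pK by (simp add: space_prob_algebra)
  have AE: "AE y in Kn n x. y \<in> R0" using AE_R0[OF sK] Suc by auto
  have Rc: "space M - R0 \<in> sets M" using R0_meas by auto
  have sup: "emeasure (Kn (Suc n) x) (space M - R0) = 0"
  proof -
    have "emeasure (Kn (Suc n) x) (space M - R0) = (\<integral>\<^sup>+y. emeasure (Tc y) (space M - R0) \<partial>Kn n x)"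
      unfolding Kn_Suc by (rule emeasure_bind_prob_algebra[OF KS Tc_kernel Rc])
    also have "\<dots> = (\<integral>\<^sup>+y. 0 \<partial>Kn n x)"
      by (rule nn_integral_cong_AE) (use AE Tc_support in auto)
    finally show ?thesis by simp
  qed
  have fk: "(\<lambda>y. ennreal (f y)) \<in> borel_measurable M" using f_meas by simp
  have "(\<integral>\<^sup>+y. ennreal (f y) \<partial>Kn (Suc n) x) = (\<integral>\<^sup>+y. (\<integral>\<^sup>+z. ennreal (f z) \<partial>Tc y) \<partial>Kn n x)"
    unfolding Kn_Suc
    by (rule nn_integral_bind[OF fk]) (simp add: measurable_cong_sets[OF sK refl] measurable_prob_algebraD[OF Tc_kernel])
  also have "\<dots> \<le> (\<integral>\<^sup>+y. ennreal lam * ennreal (f y) + ennreal b \<partial>Kn n x)"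
  proof (rule nn_integral_mono_AE)
    show "AE y in Kn n x. (\<integral>\<^sup>+z. ennreal (f z) \<partial>Tc y) \<le> ennreal lam * ennreal (f y) + ennreal b"
      using AE
    proof eventually_elim
      case (elim y)
      then have "0 \<le> f y" using f_nonneg R0_sub by auto
      then have "ennreal (lam * f y + b) = ennreal lam * ennreal (f y) + ennreal b"
        using lam b by (simp add: ennreal_mult ennreal_plus)
      then show ?case using Tc_drift elim by auto
    qed
  qed
  also have "\<dots> = ennreal lam * (\<integral>\<^sup>+y. ennreal (f y) \<partial>Kn n x) + ennreal b"
    using prob_space.emeasure_space_1[OF pK] fk
    by (subst nn_integral_add) (auto simp: measurable_cong_sets[OF sK refl] nn_integral_cmult)
  also have "\<dots> \<le> ennreal lam * ennreal (lam ^ n * f x + BB) + ennreal b"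
    using Suc by (intro add_mono mult_left_mono) auto
  also have "\<dots> = ennreal (lam ^ Suc n * f x + BB)"
  proof -
    have f0: "0 \<le> f x" using f_nonneg xs by auto
    have B0: "0 \<le> BB" using b lam by (simp add: BB_def)
    have "lam * (lam ^ n * f x + BB) + b = lam ^ Suc n * f x + BB"
      using lam by (simp add: BB_def field_simps)
    moreover have "ennreal lam * ennreal (lam ^ n * f x + BB) + ennreal b = ennreal (lam * (lam ^ n * f x + BB) + b)"
      using lam b f0 B0 by (simp add: ennreal_mult ennreal_plus)
    ultimately show ?thesis by simp
  qed
  finally show ?case using sup by simp
qed


lemma kstep_bind_Kn: assumes smu: "sets \<mu> = sets M" shows "kstep Tc n \<mu> = \<mu> \<bind> Kn n"
proof (induction n)
  case 0
  have "Kn 0 = return M" by (simp add: Kn_def fun_eq_iff)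
  then show ?case using bind_return''[OF smu] by simp
next
  case (Suc n)
  have "kstep Tc (Suc n) \<mu> = (\<mu> \<bind> Kn n) \<bind> Tc" by (simp add: kstep_Suc Suc)
  also have "\<dots> = \<mu> \<bind> (\<lambda>x. Kn n x \<bind> Tc)"
  proof (rule bind_assoc)
    show "Kn n \<in> \<mu> \<rightarrow>\<^sub>M subprob_algebra M"
      using measurable_prob_algebraD[OF Kn_kernel] by (simp add: measurable_cong_sets[OF smu refl])
    show "Tc \<in> M \<rightarrow>\<^sub>M subprob_algebra M" by (rule measurable_prob_algebraD[OF Tc_kernel])
  qed
  also have "\<dots> = \<mu> \<bind> Kn (Suc n)"
  proof -
    have "Kn (Suc n) = (\<lambda>x. Kn n x \<bind> Tc)" by (simp add: fun_eq_iff Kn_Suc)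
    then show ?thesis by simp
  qed
  finally show ?case .
qed

abbreviation "mu0 \<equiv> density \<pi> (indicator R0)"

lemma mu0_sets: "sets mu0 = sets M" using pi_sets by simp

lemma mu0_AE: "AE x in mu0. x \<in> R0"
proof -
  have "indicator R0 \<in> borel_measurable \<pi>" using R0_meas pi_sets by simp
  then show ?thesis by (subst AE_density) (auto split: split_indicator)
qed

lemma mu0_space: "emeasure mu0 (space mu0) \<le> 1"
proof -
  have sp: "space mu0 = space \<pi>" by simp
  have "emeasure mu0 (space mu0) = (\<integral>\<^sup>+x. indicator R0 x * indicator (space \<pi>) x \<partial>\<pi>)"
    unfolding sp by (rule emeasure_density) (use R0_meas pi_sets sets.top[of \<pi>] in simp_all)
  also have "\<dots> \<le> (\<integral>\<^sup>+x. 1 \<partial>\<pi>)" by (rule nn_integral_mono) (simp split: split_indicator)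
  also have "\<dots> = 1" using prob_space.emeasure_space_1[OF pi_prob] by simp
  finally show ?thesis .
qed

lemma le_min_ennreal: "a \<le> ennreal p \<Longrightarrow> a \<le> ennreal q \<Longrightarrow> a \<le> ennreal (min p q)"
  by (cases "p \<le> q") (auto simp: min_def)

lemma trunc_int: assumes c: "0 \<le> c"
  shows "(\<integral>\<^sup>+x. ennreal (min (f x) c) \<partial>mu0) \<le> ennreal BB"
proof -
  define gg where "gg n x = ennreal (min (lam ^ n * max (f x) 0 + BB) c)" for n x
  have B0: "0 \<le> BB" using b lam by (simp add: BB_def)
  have fm: "(\<lambda>y. ennreal (min (f y) c)) \<in> borel_measurable M" using f_meas by measurable
  have ggm: "gg n \<in> borel_measurable mu0" for n
  proof -
    have "(\<lambda>x. min (lam ^ n * max (f x) 0 + BB) c) \<in> borel_measurable M"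
      using f_meas by (intro borel_measurable_min borel_measurable_add borel_measurable_times borel_measurable_max) auto
    then have "gg n \<in> borel_measurable M" unfolding gg_def by (rule measurable_compose) simp
    then show ?thesis by (simp add: measurable_cong_sets[OF mu0_sets refl])
  qed
  have step: "(\<integral>\<^sup>+x. ennreal (min (f x) c) \<partial>mu0) \<le> (\<integral>\<^sup>+x. gg n x \<partial>mu0)" for n
  proof -
    have "(\<integral>\<^sup>+x. ennreal (min (f x) c) \<partial>mu0) = (\<integral>\<^sup>+x. ennreal (min (f x) c) \<partial>kstep Tc n mu0)"
      by (simp add: kstep_stat[OF Tc_kernel Tc_stat])
    also have "\<dots> = (\<integral>\<^sup>+x. ennreal (min (f x) c) \<partial>(mu0 \<bind> Kn n))"
      by (simp add: kstep_bind_Kn[OF mu0_sets])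
    also have "\<dots> = (\<integral>\<^sup>+x. (\<integral>\<^sup>+y. ennreal (min (f y) c) \<partial>Kn n x) \<partial>mu0)"
      by (rule nn_integral_bind[OF fm]) (simp add: measurable_cong_sets[OF mu0_sets refl] measurable_prob_algebraD[OF Kn_kernel])
    also have "\<dots> \<le> (\<integral>\<^sup>+x. gg n x \<partial>mu0)"
    proof (rule nn_integral_mono_AE)
      show "AE x in mu0. (\<integral>\<^sup>+y. ennreal (min (f y) c) \<partial>Kn n x) \<le> gg n x"
        using mu0_AE
      proof eventually_elim
        case (elim x)
        have xs: "x \<in> space M" using elim R0_sub by auto
        have f0: "0 \<le> f x" using f_nonneg xs by auto
        have pK: "prob_space (Kn n x)" using Kn_facts[OF xs] by auto
        have "(\<integral>\<^sup>+y. ennreal (min (f y) c) \<partial>Kn n x) \<le> (\<integral>\<^sup>+y. ennreal (f y) \<partial>Kn n x)"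
          by (rule nn_integral_mono) (simp add: ennreal_leI)
        also have "\<dots> \<le> ennreal (lam ^ n * f x + BB)" using Kn_R0[OF elim] by auto
        finally have a1: "(\<integral>\<^sup>+y. ennreal (min (f y) c) \<partial>Kn n x) \<le> ennreal (lam ^ n * max (f x) 0 + BB)"
          using f0 by simp
        have "(\<integral>\<^sup>+y. ennreal (min (f y) c) \<partial>Kn n x) \<le> (\<integral>\<^sup>+y. ennreal c \<partial>Kn n x)"
          by (rule nn_integral_mono) (simp add: ennreal_leI)
        also have "\<dots> = ennreal c" using prob_space.emeasure_space_1[OF pK] by simp
        finally have a2: "(\<integral>\<^sup>+y. ennreal (min (f y) c) \<partial>Kn n x) \<le> ennreal c" .
        show ?case unfolding gg_def by (rule le_min_ennreal[OF a1 a2])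
      qed
    qed
    finally show ?thesis .
  qed
  have dec: "decseq gg"
  proof (rule decseq_SucI, rule le_funI)
    fix n x
    have "lam ^ Suc n * max (f x) 0 \<le> lam ^ n * max (f x) 0"
      using lam by (intro mult_right_mono) (auto simp: power_decreasing)
    then show "gg (Suc n) x \<le> gg n x" unfolding gg_def by (intro ennreal_leI) auto
  qed
  have fin: "(\<integral>\<^sup>+x. gg n x \<partial>mu0) < \<infinity>" for n
  proof -
    have "(\<integral>\<^sup>+x. gg n x \<partial>mu0) \<le> (\<integral>\<^sup>+x. ennreal c \<partial>mu0)"
      by (rule nn_integral_mono) (simp add: gg_def ennreal_leI)
    also have "\<dots> = ennreal c * emeasure mu0 (space mu0)" by simp
    also have "\<dots> \<le> ennreal c * 1" by (intro mult_left_mono mu0_space) simp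
    finally show ?thesis by (simp add: le_less_trans)
  qed
  have "(\<integral>\<^sup>+x. ennreal (min (f x) c) \<partial>mu0) \<le> (INF n. (\<integral>\<^sup>+x. gg n x \<partial>mu0))"
    by (rule INF_greatest) (rule step)
  also have "\<dots> = (\<integral>\<^sup>+x. (INF n. gg n x) \<partial>mu0)"
    by (rule nn_integral_monotone_convergence_INF_decseq[symmetric, OF dec ggm fin])
  also have "\<dots> \<le> (\<integral>\<^sup>+x. ennreal BB \<partial>mu0)"
  proof (rule nn_integral_mono)
    fix x
    have lim: "(\<lambda>n. gg n x) \<longlonglongrightarrow> ennreal (min (0 + BB) c)"
    proof -
      have "(\<lambda>n. lam ^ n * max (f x) 0) \<longlonglongrightarrow> 0"
        using LIMSEQ_power_zero[of lam] lam by (intro tendsto_mult_left_zero) auto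
      then have "(\<lambda>n. lam ^ n * max (f x) 0 + BB) \<longlonglongrightarrow> 0 + BB" by (intro tendsto_add tendsto_const)
      then have "(\<lambda>n. min (lam ^ n * max (f x) 0 + BB) c) \<longlonglongrightarrow> min (0 + BB) c" by (intro tendsto_min tendsto_const)
      then show ?thesis unfolding gg_def by (rule tendsto_ennrealI)
    qed
    have "(INF n. gg n x) \<le> ennreal (min (0 + BB) c)"
      by (rule LIMSEQ_le_const[OF lim]) (auto intro: INF_lower)
    also have "\<dots> \<le> ennreal BB" by (intro ennreal_leI) simp
    finally show "(INF n. gg n x) \<le> ennreal BB" .
  qed
  also have "\<dots> = ennreal BB * emeasure mu0 (space mu0)" by simp
  also have "\<dots> \<le> ennreal BB * 1" by (intro mult_left_mono mu0_space) simp
  finally show ?thesis by simp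
qed

lemma Ipi: "(\<integral>\<^sup>+x\<in>R0. ennreal (f x) \<partial>\<pi>) \<le> ennreal (b / (1 - lam))"
proof -
  have im: "indicator R0 \<in> borel_measurable \<pi>" using R0_meas pi_sets by simp
  have fm: "(\<lambda>x. ennreal (f x)) \<in> borel_measurable \<pi>"
    using f_meas by (simp add: measurable_cong_sets[OF pi_sets refl])
  define hh where "hh i x = ennreal (min (f x) (real i))" for i x
  have "(\<integral>\<^sup>+x\<in>R0. ennreal (f x) \<partial>\<pi>) = (\<integral>\<^sup>+x. ennreal (f x) \<partial>mu0)"
    by (subst nn_integral_density[OF im fm]) (simp add: mult.commute)
  also have "\<dots> = (\<integral>\<^sup>+x. (SUP i. hh i x) \<partial>mu0)"
  proof (rule nn_integral_cong)
    fix x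
    show "ennreal (f x) = (SUP i. hh i x)"
    proof (rule antisym)
      have "hh (nat \<lceil>f x\<rceil>) x = ennreal (f x)"
        unfolding hh_def by (simp add: min_def) linarith
      then show "ennreal (f x) \<le> (SUP i. hh i x)" by (metis SUP_upper UNIV_I)
      show "(SUP i. hh i x) \<le> ennreal (f x)" by (rule SUP_least) (simp add: hh_def ennreal_leI)
    qed
  qed
  also have "\<dots> = (SUP i. (\<integral>\<^sup>+x. hh i x \<partial>mu0))"
  proof (rule nn_integral_monotone_convergence_SUP)
    show "incseq hh"
      by (rule incseq_SucI, rule le_funI) (simp add: hh_def ennreal_leI)
    show "hh i \<in> borel_measurable mu0" for i
      unfolding hh_def using f_meas by (subst measurable_cong_sets[OF mu0_sets refl]) measurable
  qed
  also have "\<dots> \<le> ennreal BB"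
    by (rule SUP_least) (unfold hh_def, rule trunc_int, simp)
  finally show ?thesis by (simp add: BB_def)
qed

end




locale cpl =
  fixes M :: "'a measure" and P :: "'a \<Rightarrow> 'a measure" and \<pi> \<nu> Q :: "'a measure"
    and R0 :: "'a set" and f :: "'a \<Rightarrow> real" and lam b d \<epsilon> :: real
  assumes P_kernel: "P \<in> M \<rightarrow>\<^sub>M prob_algebra M"
    and pi_prob: "prob_space \<pi>" and pi_sets: "sets \<pi> = sets M" and pi_stat: "\<pi> \<bind> P = \<pi>"
    and R0_meas: "R0 \<in> sets M"
    and f_meas: "f \<in> borel_measurable M" and f_nonneg: "\<forall>x\<in>space M. 0 \<le> f x"
    and lam: "0 < lam" "lam < 1" and b: "0 \<le> b"
    and drift: "\<forall>x\<in>R0. (\<integral>\<^sup>+y. ennreal (f y) \<partial>(P x)) \<le> ennreal (lam * f x + b)"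
    and d: "d > 2 * b / (1 - lam)"
    and eps: "0 < \<epsilon>" "\<epsilon> \<le> 1"
    and Q_prob: "prob_space Q" and Q_sets: "sets Q = sets M"
    and minor: "\<forall>x\<in>{x\<in>space M. f x \<le> d}. \<forall>A\<in>sets M. measure (P x) A \<ge> \<epsilon> * measure Q A"
    and nu_prob: "prob_space \<nu>" and nu_sets: "sets \<nu> = sets M"
    and nu_R0: "measure \<nu> R0 = 1"
    and Ipi: "(\<integral>\<^sup>+x\<in>R0. ennreal (f x) \<partial>\<pi>) \<le> ennreal (b / (1 - lam))"
begin

definition "RR = {x\<in>space M. f x \<le> d}"

lemma RR_meas[measurable]: "RR \<in> sets M"
  unfolding RR_def using f_meas by measurable

lemma R0_sub: "R0 \<subseteq> space M" using R0_meas sets.sets_into_space by auto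

lemma P_space: "x \<in> space M \<Longrightarrow> P x \<in> space (prob_algebra M)"
  by (rule measurable_space[OF P_kernel])

lemma P_sets[simp]: "x \<in> space M \<Longrightarrow> sets (P x) = sets M"
  using P_space by (simp add: space_prob_algebra)

lemma P_prob: "x \<in> space M \<Longrightarrow> prob_space (P x)"
  using P_space by (simp add: space_prob_algebra)

definition "Rk x = (if x \<in> RR \<and> \<epsilon> < 1 then
   measure_of (space M) (sets M) (\<lambda>A. ennreal ((measure (P x) A - \<epsilon> * measure Q A) / (1 - \<epsilon>)))
   else P x)"

lemma Rk_emeasure:
  assumes x: "x \<in> RR" and e1: "\<epsilon> < 1" and A: "A \<in> sets M"
  shows "emeasure (Rk x) A = ennreal ((measure (P x) A - \<epsilon> * measure Q A) / (1 - \<epsilon>))"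
proof -
  have xs: "x \<in> space M" using x by (simp add: RR_def)
  interpret Px: prob_space "P x" using P_prob[OF xs] .
  interpret Qp: prob_space Q using Q_prob .
  let ?g = "\<lambda>A. (measure (P x) A - \<epsilon> * measure Q A) / (1 - \<epsilon>)"
  have gnn: "B \<in> sets M \<Longrightarrow> 0 \<le> ?g B" for B
    using minor x e1 by (auto simp: RR_def)
  have ca: "countably_additive (sets M) (\<lambda>A. ennreal (?g A))"
  proof (rule countably_additiveI)
    fix F :: "nat \<Rightarrow> 'a set"
    assume F: "range F \<subseteq> sets M" "disjoint_family F" "\<Union> (range F) \<in> sets M"
    have s1: "(\<lambda>i. measure (P x) (F i)) sums measure (P x) (\<Union>i. F i)"
      using Px.finite_measure_UNION[of F] F by (simp add: P_sets[OF xs])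
    have s2: "(\<lambda>i. measure Q (F i)) sums measure Q (\<Union>i. F i)"
      using Qp.finite_measure_UNION[of F] F by (simp add: Q_sets)
    have s: "(\<lambda>i. ?g (F i)) sums ?g (\<Union>i. F i)"
      by (intro sums_divide sums_diff s1 sums_mult s2)
    show "(\<Sum>i. ennreal (?g (F i))) = ennreal (?g (\<Union>i. F i))"
      using s gnn F(1) by (subst suminf_ennreal2) (auto simp: sums_iff)
  qed
  have pos: "positive (sets M) (\<lambda>A. ennreal (?g A))"
    by (simp add: positive_def)
  show ?thesis
    unfolding Rk_def using x e1
    by (simp add: emeasure_measure_of_sigma[OF sets.sigma_algebra_axioms pos ca A])
qed

lemma Rk_sets[simp]: "x \<in> space M \<Longrightarrow> sets (Rk x) = sets M"
  by (simp add: Rk_def)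

lemma P_ge_Q: assumes x: "x \<in> RR" and A: "A \<in> sets M" shows "\<epsilon> * measure Q A \<le> measure (P x) A"
  using minor x A by (auto simp: RR_def)

lemma Rk_decomp:
  assumes x: "x \<in> RR" and A: "A \<in> sets M"
  shows "emeasure (P x) A = ennreal \<epsilon> * emeasure Q A + ennreal (1 - \<epsilon>) * emeasure (Rk x) A"
proof -
  have xs: "x \<in> space M" using x by (simp add: RR_def)
  interpret Px: prob_space "P x" using P_prob[OF xs] .
  interpret Qp: prob_space Q using Q_prob .
  show ?thesis
  proof (cases "\<epsilon> < 1")
    case True
    have g: "0 \<le> (measure (P x) A - \<epsilon> * measure Q A) / (1 - \<epsilon>)" using P_ge_Q[OF x A] True by simp
    define g where "g = (measure (P x) A - \<epsilon> * measure Q A) / (1 - \<epsilon>)"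
    have g0: "0 \<le> g" using g g_def by simp
    have eq: "measure (P x) A = \<epsilon> * measure Q A + (1 - \<epsilon>) * g"
      using True by (simp add: g_def field_simps)
    have "emeasure (P x) A = ennreal (\<epsilon> * measure Q A) + ennreal ((1 - \<epsilon>) * g)"
      using eq eps True g0 by (simp add: Px.emeasure_eq_measure ennreal_plus[symmetric] del: ennreal_plus)
    also have "\<dots> = ennreal \<epsilon> * emeasure Q A + ennreal (1 - \<epsilon>) * emeasure (Rk x) A"
      using True eps g0 by (simp add: Rk_emeasure[OF x True A] g_def[symmetric] Qp.emeasure_eq_measure ennreal_mult)
    finally show ?thesis .
  next
    case False
    then have e: "\<epsilon> = 1" using eps by simp
    have A': "space M - A \<in> sets M" using A by auto
    have 1: "measure Q A \<le> measure (P x) A" using P_ge_Q[OF x A] e by simp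
    have 2: "measure Q (space M - A) \<le> measure (P x) (space M - A)" using P_ge_Q[OF x A'] e by simp
    have "measure Q (space M - A) = 1 - measure Q A"
      using Qp.prob_compl[of A] A by (simp add: Q_sets sets_eq_imp_space_eq[OF Q_sets])
    moreover have "measure (P x) (space M - A) = 1 - measure (P x) A"
      using Px.prob_compl[of A] A xs by (simp add: sets_eq_imp_space_eq[OF P_sets[OF xs]])
    ultimately have "measure Q A = measure (P x) A" using 1 2 by simp
    then show ?thesis using e by (simp add: Px.emeasure_eq_measure Qp.emeasure_eq_measure)
  qed
qed

lemma Rk_prob: assumes xs: "x \<in> space M" shows "prob_space (Rk x)"
proof (cases "x \<in> RR \<and> \<epsilon> < 1")
  case True
  interpret Px: prob_space "P x" using P_prob[OF xs] .
  interpret Qp: prob_space Q using Q_prob .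
  have "emeasure (Rk x) (space M) = 1"
    using True eps by (simp add: Rk_emeasure Px.prob_space[unfolded sets_eq_imp_space_eq[OF P_sets[OF xs]]]
        Qp.prob_space[unfolded sets_eq_imp_space_eq[OF Q_sets]])
  then show ?thesis using xs by (intro prob_spaceI) (simp add: sets_eq_imp_space_eq[OF Rk_sets[OF xs]])
next
  case False then show ?thesis using P_prob[OF xs] by (auto simp: Rk_def)
qed

lemma Rk_kernel: "Rk \<in> M \<rightarrow>\<^sub>M prob_algebra M"
proof (rule measurable_prob_algebra_generated[where \<Omega>="space M" and G="sets M"])
  show "sets M = sigma_sets (space M) (sets M)" by (simp add: sets.sigma_sets_eq)
  show "Int_stable (sets M)" by (auto simp: Int_stable_def)
  show "sets M \<subseteq> Pow (space M)" using sets.space_closed by auto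
  show "\<And>a. a \<in> space M \<Longrightarrow> prob_space (Rk a)" by (rule Rk_prob)
  show "\<And>a. a \<in> space M \<Longrightarrow> sets (Rk a) = sets M" by simp
  fix A assume A: "A \<in> sets M"
  have mP: "(\<lambda>x. measure (P x) A) \<in> borel_measurable M"
    using measurable_compose[OF P_kernel measurable_measure_prob_algebra[OF A]] by simp
  have eP: "(\<lambda>x. emeasure (P x) A) \<in> borel_measurable M"
    using measurable_compose[OF measurable_prob_algebraD[OF P_kernel] measurable_emeasure_subprob_algebra[OF A]] by simp
  have "(\<lambda>x. emeasure (Rk x) A) \<in> borel_measurable M \<longleftrightarrow>
     (\<lambda>x. if x \<in> RR \<and> \<epsilon> < 1 then ennreal ((measure (P x) A - \<epsilon> * measure Q A) / (1 - \<epsilon>)) else emeasure (P x) A) \<in> borel_measurable M"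
  proof (intro measurable_cong)
    fix w assume "w \<in> space M"
    show "emeasure (Rk w) A = (if w \<in> RR \<and> \<epsilon> < 1 then ennreal ((measure (P w) A - \<epsilon> * measure Q A) / (1 - \<epsilon>)) else emeasure (P w) A)"
      using Rk_emeasure[OF _ _ A, of w] by (cases "w \<in> RR \<and> \<epsilon> < 1") (auto simp: Rk_def)
  qed
  also have "\<dots>" using mP eP by measurable
  finally show "(\<lambda>x. emeasure (Rk x) A) \<in> borel_measurable M" .
qed

declare R0_meas[measurable] f_meas[measurable]

definition "S = M \<Otimes>\<^sub>M M \<Otimes>\<^sub>M (count_space UNIV :: nat measure) \<Otimes>\<^sub>M (count_space UNIV :: bool measure) \<Otimes>\<^sub>M (count_space UNIV :: bool measure)"
definition "NS = (count_space UNIV :: bool measure) \<Otimes>\<^sub>M M \<Otimes>\<^sub>M M \<Otimes>\<^sub>M M"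

definition sx :: "'a \<times> 'a \<times> nat \<times> bool \<times> bool \<Rightarrow> 'a" where "sx s = fst s"
definition sy :: "'a \<times> 'a \<times> nat \<times> bool \<times> bool \<Rightarrow> 'a" where "sy s = fst (snd s)"
definition sj :: "'a \<times> 'a \<times> nat \<times> bool \<times> bool \<Rightarrow> nat" where "sj s = fst (snd (snd s))"
definition sal :: "'a \<times> 'a \<times> nat \<times> bool \<times> bool \<Rightarrow> bool" where "sal s = fst (snd (snd (snd s)))"
definition scp :: "'a \<times> 'a \<times> nat \<times> bool \<times> bool \<Rightarrow> bool" where "scp s = snd (snd (snd (snd s)))"
definition "Yp s = (if scp s then sx s else sy s)"

definition "pc s \<longleftrightarrow> \<not> scp s \<and> sx s \<in> RR \<and> sy s \<in> RR"
definition "nj s = sj s + (if sx s \<in> RR \<and> Yp s \<in> RR then 1 else 0)"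
definition "nal s \<longleftrightarrow> sal s \<and> sx s \<in> R0 \<and> Yp s \<in> R0"

definition "B1 = measure_pmf (bernoulli_pmf \<epsilon>)"
definition "B0 = measure_pmf (bernoulli_pmf 0)"

definition "Nz s = (if pc s then B1 \<Otimes>\<^sub>M Q \<Otimes>\<^sub>M Rk (sx s) \<Otimes>\<^sub>M Rk (sy s)
                    else B0 \<Otimes>\<^sub>M Q \<Otimes>\<^sub>M P (sx s) \<Otimes>\<^sub>M P (sy s))"

definition Gm :: "'a \<times> 'a \<times> nat \<times> bool \<times> bool \<Rightarrow> bool \<times> 'a \<times> 'a \<times> 'a \<Rightarrow> 'a \<times> 'a \<times> nat \<times> bool \<times> bool" where
  "Gm s w = (case w of (c, z, x', y') \<Rightarrow>
     if scp s then (x', x', nj s, nal s, True)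
     else if c then (z, z, nj s, nal s, True) else (x', y', nj s, nal s, False))"

definition "K s = distr (Nz s) S (Gm s)"

lemma sx_meas[measurable]: "sx \<in> S \<rightarrow>\<^sub>M M" unfolding sx_def S_def by measurable
lemma sy_meas[measurable]: "sy \<in> S \<rightarrow>\<^sub>M M" unfolding sy_def S_def by measurable
lemma sj_meas[measurable]: "sj \<in> S \<rightarrow>\<^sub>M count_space UNIV" unfolding sj_def S_def by measurable
lemma sal_meas[measurable]: "sal \<in> S \<rightarrow>\<^sub>M count_space UNIV" unfolding sal_def S_def by measurable
lemma scp_meas[measurable]: "scp \<in> S \<rightarrow>\<^sub>M count_space UNIV" unfolding scp_def S_def by measurable
lemma Yp_meas[measurable]: "Yp \<in> S \<rightarrow>\<^sub>M M" unfolding Yp_def by measurable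

lemma pc_meas[measurable]: "Measurable.pred S pc" unfolding pc_def by measurable
lemma nal_meas[measurable]: "Measurable.pred S nal" unfolding nal_def by measurable
lemma nj_meas[measurable]: "nj \<in> S \<rightarrow>\<^sub>M count_space UNIV" unfolding nj_def by measurable

lemma B1_space: "B1 \<in> space (prob_algebra (count_space UNIV))"
  unfolding B1_def by (simp add: space_prob_algebra prob_space_measure_pmf)
lemma B0_space: "B0 \<in> space (prob_algebra (count_space UNIV))"
  unfolding B0_def by (simp add: space_prob_algebra prob_space_measure_pmf)
lemma Q_space: "Q \<in> space (prob_algebra M)"
  using Q_prob Q_sets by (simp add: space_prob_algebra)

lemma Nz_kernel: "Nz \<in> S \<rightarrow>\<^sub>M prob_algebra NS"
proof -
  have k1: "(\<lambda>s. B1 \<Otimes>\<^sub>M Q \<Otimes>\<^sub>M Rk (sx s) \<Otimes>\<^sub>M Rk (sy s)) \<in> S \<rightarrow>\<^sub>M prob_algebra NS"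
    unfolding NS_def
    by (intro measurable_pair_prob measurable_const B1_space Q_space
        measurable_compose[OF sx_meas Rk_kernel] measurable_compose[OF sy_meas Rk_kernel])
  have k0: "(\<lambda>s. B0 \<Otimes>\<^sub>M Q \<Otimes>\<^sub>M P (sx s) \<Otimes>\<^sub>M P (sy s)) \<in> S \<rightarrow>\<^sub>M prob_algebra NS"
    unfolding NS_def
    by (intro measurable_pair_prob measurable_const B0_space Q_space
        measurable_compose[OF sx_meas P_kernel] measurable_compose[OF sy_meas P_kernel])
  show ?thesis unfolding Nz_def
    by (rule measurable_If[OF k1 k0]) simp
qed

lemma Gm_meas: "(\<lambda>(s, w). Gm s w) \<in> S \<Otimes>\<^sub>M NS \<rightarrow>\<^sub>M S"
  unfolding Gm_def NS_def by (subst (2) S_def) measurable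

lemma K_kernel: "K \<in> S \<rightarrow>\<^sub>M prob_algebra S"
  unfolding K_def by (rule measurable_distr_prob_space2[OF Nz_kernel Gm_meas])


lemma space_NS: "space NS = UNIV \<times> space M \<times> space M \<times> space M"
  by (simp add: NS_def space_pair_measure)

lemma space_S: "space S = space M \<times> space M \<times> UNIV \<times> UNIV \<times> UNIV"
  by (simp add: S_def space_pair_measure)

lemma em4:
  fixes B :: "bool measure"
  assumes B: "prob_space B" "sets B = UNIV"
    and Q1: "prob_space Q1" "sets Q1 = sets M" and X: "prob_space X" "sets X = sets M"
    and Y: "prob_space Y" "sets Y = sets M"
    and A1: "A1 \<in> sets M" and A2: "A2 \<in> sets M" and A3: "A3 \<in> sets M"
  shows "emeasure (B \<Otimes>\<^sub>M Q1 \<Otimes>\<^sub>M X \<Otimes>\<^sub>M Y) (C \<times> A1 \<times> A2 \<times> A3) =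
    emeasure B C * emeasure Q1 A1 * emeasure X A2 * emeasure Y A3"
proof -
  interpret X: prob_space X by fact
  interpret Y: prob_space Y by fact
  interpret Q1: prob_space Q1 by fact
  interpret B: prob_space B by fact
  interpret XY: prob_space "X \<Otimes>\<^sub>M Y" by (rule prob_space_pair) fact+
  interpret QXY: prob_space "Q1 \<Otimes>\<^sub>M X \<Otimes>\<^sub>M Y" by (rule prob_space_pair) (fact, rule XY.prob_space_axioms)
  have s1: "A2 \<times> A3 \<in> sets (X \<Otimes>\<^sub>M Y)" using A2 A3 X Y by simp
  have s2: "A1 \<times> A2 \<times> A3 \<in> sets (Q1 \<Otimes>\<^sub>M X \<Otimes>\<^sub>M Y)" using A1 A2 A3 X Y Q1 by simp
  have "emeasure (B \<Otimes>\<^sub>M Q1 \<Otimes>\<^sub>M X \<Otimes>\<^sub>M Y) (C \<times> A1 \<times> A2 \<times> A3) =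
        emeasure B C * emeasure (Q1 \<Otimes>\<^sub>M X \<Otimes>\<^sub>M Y) (A1 \<times> A2 \<times> A3)"
    using B s2 by (intro QXY.emeasure_pair_measure_Times) auto
  also have "emeasure (Q1 \<Otimes>\<^sub>M X \<Otimes>\<^sub>M Y) (A1 \<times> A2 \<times> A3) = emeasure Q1 A1 * emeasure (X \<Otimes>\<^sub>M Y) (A2 \<times> A3)"
    using A1 Q1 s1 by (intro XY.emeasure_pair_measure_Times) auto
  also have "emeasure (X \<Otimes>\<^sub>M Y) (A2 \<times> A3) = emeasure X A2 * emeasure Y A3"
    using A2 A3 X Y by (intro Y.emeasure_pair_measure_Times) auto
  finally show ?thesis by (simp add: mult.assoc)
qed


lemma B_facts:
  "prob_space B1" "sets B1 = UNIV" "prob_space B0" "sets B0 = UNIV"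
  "emeasure B1 {True} = ennreal \<epsilon>" "emeasure B1 {False} = ennreal (1 - \<epsilon>)"
  "emeasure B0 {True} = 0" "emeasure B0 {False} = 1"
  "emeasure B1 UNIV = 1" "emeasure B0 UNIV = 1"
  using eps by (simp_all add: B1_def B0_def prob_space_measure_pmf emeasure_pmf_single measure_pmf.emeasure_space_1[simplified])

lemma Nz_split:
  "Nz s = (if pc s then B1 else B0) \<Otimes>\<^sub>M Q \<Otimes>\<^sub>M (if pc s then Rk (sx s) else P (sx s))
            \<Otimes>\<^sub>M (if pc s then Rk (sy s) else P (sy s))"
  by (simp add: Nz_def)

lemma Nz_sets: "s \<in> space S \<Longrightarrow> sets (Nz s) = sets NS"
  using measurable_space[OF Nz_kernel] by (simp add: space_prob_algebra)

lemma em_union: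
  fixes Bs :: "bool measure"
  assumes A: "A \<in> sets M"
    and pX: "prob_space X" "sets X = sets M" and pY: "prob_space Y" "sets Y = sets M"
    and pB: "prob_space Bs" "sets Bs = UNIV"
  shows "emeasure (Bs \<Otimes>\<^sub>M Q \<Otimes>\<^sub>M X \<Otimes>\<^sub>M Y) ({True} \<times> A \<times> space M \<times> space M \<union> {False} \<times> space M \<times> A \<times> space M)
          = emeasure Bs {True} * emeasure Q A + emeasure Bs {False} * emeasure X A"
    and "emeasure (Bs \<Otimes>\<^sub>M Q \<Otimes>\<^sub>M X \<Otimes>\<^sub>M Y) ({True} \<times> A \<times> space M \<times> space M \<union> {False} \<times> space M \<times> space M \<times> A)
          = emeasure Bs {True} * emeasure Q A + emeasure Bs {False} * emeasure Y A"
    and "emeasure (Bs \<Otimes>\<^sub>M Q \<Otimes>\<^sub>M X \<Otimes>\<^sub>M Y) (UNIV \<times> space M \<times> A \<times> space M) = emeasure X A"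
proof -
  note Qp = Q_prob Q_sets
  have sp: "space M \<in> sets M" by simp
  have e1: "emeasure X (space M) = 1" "emeasure Y (space M) = 1" "emeasure Q (space M) = 1"
    using prob_space.emeasure_space_1[OF pX(1)] prob_space.emeasure_space_1[OF pY(1)]
      prob_space.emeasure_space_1[OF Q_prob]
    by (simp_all add: sets_eq_imp_space_eq[OF pX(2)] sets_eq_imp_space_eq[OF pY(2)] sets_eq_imp_space_eq[OF Q_sets])
  have sN: "sets (Bs \<Otimes>\<^sub>M Q \<Otimes>\<^sub>M X \<Otimes>\<^sub>M Y) = sets NS" unfolding NS_def
    by (intro sets_pair_measure_cong) (simp_all add: pB pX pY Q_sets)
  have m: "{c} \<times> A1 \<times> A2 \<times> A3 \<in> sets NS" if "A1 \<in> sets M" "A2 \<in> sets M" "A3 \<in> sets M" for c A1 A2 A3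
    using that unfolding NS_def by (intro pair_measureI) auto
  have "emeasure (Bs \<Otimes>\<^sub>M Q \<Otimes>\<^sub>M X \<Otimes>\<^sub>M Y) ({True} \<times> A \<times> space M \<times> space M \<union> {False} \<times> space M \<times> A \<times> space M)
      = emeasure (Bs \<Otimes>\<^sub>M Q \<Otimes>\<^sub>M X \<Otimes>\<^sub>M Y) ({True} \<times> A \<times> space M \<times> space M) + emeasure (Bs \<Otimes>\<^sub>M Q \<Otimes>\<^sub>M X \<Otimes>\<^sub>M Y) ({False} \<times> space M \<times> A \<times> space M)"
    by (rule plus_emeasure[symmetric]) (auto simp only: sN intro!: m A sp)
  also have "\<dots> = emeasure Bs {True} * emeasure Q A + emeasure Bs {False} * emeasure X A"
    by (simp only: em4[OF pB Qp pX pY A sp sp, of "{True}"] em4[OF pB Qp pX pY sp A sp, of "{False}"] e1 mult_1_right)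
  finally show "emeasure (Bs \<Otimes>\<^sub>M Q \<Otimes>\<^sub>M X \<Otimes>\<^sub>M Y) ({True} \<times> A \<times> space M \<times> space M \<union> {False} \<times> space M \<times> A \<times> space M)
          = emeasure Bs {True} * emeasure Q A + emeasure Bs {False} * emeasure X A" .
  have "emeasure (Bs \<Otimes>\<^sub>M Q \<Otimes>\<^sub>M X \<Otimes>\<^sub>M Y) ({True} \<times> A \<times> space M \<times> space M \<union> {False} \<times> space M \<times> space M \<times> A)
      = emeasure (Bs \<Otimes>\<^sub>M Q \<Otimes>\<^sub>M X \<Otimes>\<^sub>M Y) ({True} \<times> A \<times> space M \<times> space M) + emeasure (Bs \<Otimes>\<^sub>M Q \<Otimes>\<^sub>M X \<Otimes>\<^sub>M Y) ({False} \<times> space M \<times> space M \<times> A)"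
    by (rule plus_emeasure[symmetric]) (auto simp only: sN intro!: m A sp)
  also have "\<dots> = emeasure Bs {True} * emeasure Q A + emeasure Bs {False} * emeasure Y A"
    by (simp only: em4[OF pB Qp pX pY A sp sp, of "{True}"] em4[OF pB Qp pX pY sp sp A, of "{False}"] e1 mult_1_right mult_1_left)
  finally show "emeasure (Bs \<Otimes>\<^sub>M Q \<Otimes>\<^sub>M X \<Otimes>\<^sub>M Y) ({True} \<times> A \<times> space M \<times> space M \<union> {False} \<times> space M \<times> space M \<times> A)
          = emeasure Bs {True} * emeasure Q A + emeasure Bs {False} * emeasure Y A" .
  have eB: "emeasure Bs UNIV = 1"
    using prob_space.emeasure_space_1[OF pB(1)] sets_eq_imp_space_eq[of Bs "count_space UNIV"] pB(2) by simp
  show "emeasure (Bs \<Otimes>\<^sub>M Q \<Otimes>\<^sub>M X \<Otimes>\<^sub>M Y) (UNIV \<times> space M \<times> A \<times> space M) = emeasure X A"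
    by (simp only: em4[OF pB Qp pX pY sp A sp, of "UNIV"] e1 eB mult_1_right mult_1_left)
qed


lemma K_space: "s \<in> space S \<Longrightarrow> K s \<in> space (prob_algebra S)"
  by (rule measurable_space[OF K_kernel])
lemma K_sets: "s \<in> space S \<Longrightarrow> sets (K s) = sets S"
  using K_space by (simp add: space_prob_algebra)
lemma K_prob: "s \<in> space S \<Longrightarrow> prob_space (K s)"
  using K_space by (simp add: space_prob_algebra)

lemma Gm_meas1: "s \<in> space S \<Longrightarrow> Gm s \<in> Nz s \<rightarrow>\<^sub>M S"
  using measurable_Pair2[OF Gm_meas] by (simp add: measurable_cong_sets[OF Nz_sets refl])

lemma s_facts: "s \<in> space S \<Longrightarrow> sx s \<in> space M \<and> sy s \<in> space M \<and> Yp s \<in> space M"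
  by (auto simp: space_S sx_def sy_def Yp_def)

lemma Nz_parts:
  assumes s: "s \<in> space S"
  shows "prob_space (if pc s then Rk (sx s) else P (sx s))" "sets (if pc s then Rk (sx s) else P (sx s)) = sets M"
    "prob_space (if pc s then Rk (sy s) else P (sy s))" "sets (if pc s then Rk (sy s) else P (sy s)) = sets M"
    "prob_space (if pc s then B1 else B0)" "sets (if pc s then B1 else B0) = UNIV"
  using s_facts[OF s] Rk_prob P_prob B_facts by auto

lemma mix_eq:
  assumes s: "s \<in> space S" and nc: "\<not> scp s" and A: "A \<in> sets M"
  shows "emeasure (if pc s then B1 else B0) {True} * emeasure Q A +
         emeasure (if pc s then B1 else B0) {False} * emeasure (if pc s then Rk (sx s) else P (sx s)) A
         = emeasure (P (sx s)) A"
    and "emeasure (if pc s then B1 else B0) {True} * emeasure Q A +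
         emeasure (if pc s then B1 else B0) {False} * emeasure (if pc s then Rk (sy s) else P (sy s)) A
         = emeasure (P (sy s)) A"
proof -
  show "emeasure (if pc s then B1 else B0) {True} * emeasure Q A +
         emeasure (if pc s then B1 else B0) {False} * emeasure (if pc s then Rk (sx s) else P (sx s)) A
         = emeasure (P (sx s)) A"
  proof (cases "pc s")
    case True then have "sx s \<in> RR" by (simp add: pc_def)
    then show ?thesis using True Rk_decomp[OF _ A] B_facts by simp
  qed (simp add: B_facts)
  show "emeasure (if pc s then B1 else B0) {True} * emeasure Q A +
         emeasure (if pc s then B1 else B0) {False} * emeasure (if pc s then Rk (sy s) else P (sy s)) A
         = emeasure (P (sy s)) A"
  proof (cases "pc s")
    case True then have "sy s \<in> RR" by (simp add: pc_def)
    then show ?thesis using True Rk_decomp[OF _ A] B_facts by simp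
  qed (simp add: B_facts)
qed

lemma margX: assumes s: "s \<in> space S" shows "distr (K s) M sx = P (sx s)"
proof -
  have d: "distr (K s) M sx = distr (Nz s) M (sx \<circ> Gm s)"
    unfolding K_def by (rule distr_distr[OF sx_meas Gm_meas1[OF s]])
  have sxs: "sx s \<in> space M" using s_facts[OF s] by simp
  show ?thesis unfolding d
  proof (rule measure_eqI)
    show "sets (distr (Nz s) M (sx \<circ> Gm s)) = sets (P (sx s))" using sxs by simp
    fix A assume "A \<in> sets (distr (Nz s) M (sx \<circ> Gm s))"
    then have A: "A \<in> sets M" by simp
    have As: "A \<subseteq> space M" using A sets.sets_into_space by auto
    have mm: "sx \<circ> Gm s \<in> Nz s \<rightarrow>\<^sub>M M" using sx_meas Gm_meas1[OF s] by (rule measurable_comp[rotated])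
    have sp: "space (Nz s) = space NS" using Nz_sets[OF s] by (rule sets_eq_imp_space_eq)
    have pre: "(sx \<circ> Gm s) -` A \<inter> space NS =
      (if scp s then UNIV \<times> space M \<times> A \<times> space M
       else {True} \<times> A \<times> space M \<times> space M \<union> {False} \<times> space M \<times> A \<times> space M)"
      using As by (auto simp: space_NS Gm_def sx_def split: if_splits)
    show "emeasure (distr (Nz s) M (sx \<circ> Gm s)) A = emeasure (P (sx s)) A"
    proof (cases "scp s")
      case True
      then have npc: "\<not> pc s" by (simp add: pc_def)
      show ?thesis
        unfolding emeasure_distr[OF mm A] sp pre using True npc
          em_union(3)[OF A Nz_parts[OF s]] by (simp add: Nz_split)
    next
      case False
      show ?thesis
        unfolding emeasure_distr[OF mm A] sp pre using False
          em_union(1)[OF A Nz_parts[OF s]] mix_eq(1)[OF s False A] by (simp add: Nz_split[symmetric])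
    qed
  qed
qed

lemma margY: assumes s: "s \<in> space S" shows "distr (K s) M Yp = P (Yp s)"
proof -
  have d: "distr (K s) M Yp = distr (Nz s) M (Yp \<circ> Gm s)"
    unfolding K_def by (rule distr_distr[OF Yp_meas Gm_meas1[OF s]])
  have sxs: "Yp s \<in> space M" using s_facts[OF s] by simp
  show ?thesis unfolding d
  proof (rule measure_eqI)
    show "sets (distr (Nz s) M (Yp \<circ> Gm s)) = sets (P (Yp s))" using sxs by simp
    fix A assume "A \<in> sets (distr (Nz s) M (Yp \<circ> Gm s))"
    then have A: "A \<in> sets M" by simp
    have As: "A \<subseteq> space M" using A sets.sets_into_space by auto
    have mm: "Yp \<circ> Gm s \<in> Nz s \<rightarrow>\<^sub>M M" using Yp_meas Gm_meas1[OF s] by (rule measurable_comp[rotated])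
    have sp: "space (Nz s) = space NS" using Nz_sets[OF s] by (rule sets_eq_imp_space_eq)
    have pre: "(Yp \<circ> Gm s) -` A \<inter> space NS =
      (if scp s then UNIV \<times> space M \<times> A \<times> space M
       else {True} \<times> A \<times> space M \<times> space M \<union> {False} \<times> space M \<times> space M \<times> A)"
      using As by (auto simp: space_NS Gm_def sx_def Yp_def scp_def sy_def split: if_splits)
    show "emeasure (distr (Nz s) M (Yp \<circ> Gm s)) A = emeasure (P (Yp s)) A"
    proof (cases "scp s")
      case True
      then have npc: "\<not> pc s" by (simp add: pc_def)
      show ?thesis
        unfolding emeasure_distr[OF mm A] sp pre using True npc
          em_union(3)[OF A Nz_parts[OF s]] by (simp add: Nz_split Yp_def)
    next
      case False
      show ?thesis
        unfolding emeasure_distr[OF mm A] sp pre using False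
          em_union(2)[OF A Nz_parts[OF s]] mix_eq(2)[OF s False A] by (simp add: Nz_split[symmetric] Yp_def)
    qed
  qed
qed


definition init :: "'a \<times> 'a \<Rightarrow> 'a \<times> 'a \<times> nat \<times> bool \<times> bool" where
  "init z = (fst z, snd z, 0, fst z \<in> R0 \<and> snd z \<in> R0, False)"
definition "J0 = distr (\<nu> \<Otimes>\<^sub>M \<pi>) S init"
definition "J n = kstep K n J0"

lemma NP_sets: "sets (\<nu> \<Otimes>\<^sub>M \<pi>) = sets (M \<Otimes>\<^sub>M M)"
  by (intro sets_pair_measure_cong nu_sets pi_sets)

lemma NP_prob: "prob_space (\<nu> \<Otimes>\<^sub>M \<pi>)"
  by (intro prob_space_pair nu_prob pi_prob)

lemma init_meas: "init \<in> \<nu> \<Otimes>\<^sub>M \<pi> \<rightarrow>\<^sub>M S"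
  unfolding measurable_cong_sets[OF NP_sets refl] init_def S_def by measurable

lemma J0_space: "J0 \<in> space (prob_algebra S)"
  unfolding J0_def space_prob_algebra
  using prob_space.prob_space_distr[OF NP_prob init_meas] by simp

lemma J_space: "J n \<in> space (prob_algebra S)"
  unfolding J_def by (rule kstep_space[OF K_kernel J0_space])

lemma J_sets[simp]: "sets (J n) = sets S" and J_prob: "prob_space (J n)"
  using J_space[of n] by (simp_all add: space_prob_algebra)

lemma J_Suc: "J (Suc n) = J n \<bind> K"
  by (simp add: J_def kstep_Suc)

lemma J_spaceS: "space (J n) = space S"
  by (rule sets_eq_imp_space_eq) simp

lemma J_not_empty: "space (J n) \<noteq> {}"
  using prob_space.not_empty[OF J_prob] .

lemma P_kernel_sub: "P \<in> M \<rightarrow>\<^sub>M subprob_algebra M"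
  by (rule measurable_prob_algebraD[OF P_kernel])

lemma K_kernel_sub: "K \<in> S \<rightarrow>\<^sub>M subprob_algebra S"
  by (rule measurable_prob_algebraD[OF K_kernel])

lemma distr_J_Suc:
  assumes g: "g \<in> S \<rightarrow>\<^sub>M M" and marg: "\<And>s. s \<in> space S \<Longrightarrow> distr (K s) M g = P (g s)"
  shows "distr (J (Suc n)) M g = distr (J n) M g \<bind> P"
proof -
  have gJ: "g \<in> J n \<rightarrow>\<^sub>M M" using g by (simp add: measurable_cong_sets[OF J_sets refl])
  have KJ: "K \<in> J n \<rightarrow>\<^sub>M subprob_algebra S" using K_kernel_sub by (simp add: measurable_cong_sets[OF J_sets refl])
  have "distr (J (Suc n)) M g = J n \<bind> (\<lambda>s. distr (K s) M g)"
    unfolding J_Suc by (rule distr_bind[OF KJ J_not_empty g])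
  also have "\<dots> = J n \<bind> (\<lambda>s. P (g s))"
    by (rule bind_cong) (simp_all add: J_spaceS marg)
  also have "\<dots> = distr (J n) M g \<bind> P"
    by (rule bind_distr[OF gJ P_kernel_sub J_not_empty, symmetric])
  finally show ?thesis .
qed

lemma J_margX: "distr (J n) M sx = kstep P n \<nu>"
proof (induction n)
  case 0
  have "distr (J 0) M sx = distr (\<nu> \<Otimes>\<^sub>M \<pi>) M (sx \<circ> init)"
    by (simp add: J_def J0_def distr_distr[OF sx_meas init_meas])
  also have "\<dots> = distr (\<nu> \<Otimes>\<^sub>M \<pi>) \<nu> fst"
    by (rule distr_cong) (auto simp: nu_sets sx_def init_def)
  also have "\<dots> = \<nu>" by (rule prob_space.distr_pair_fst[OF pi_prob])
  finally show ?case by simp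
next
  case (Suc n)
  show ?case using distr_J_Suc[OF sx_meas margX] Suc by (simp add: kstep_Suc)
qed

lemma J_margY: "distr (J n) M Yp = \<pi>"
proof (induction n)
  case 0
  interpret p1: prob_space \<nu> by (rule nu_prob)
  interpret p2: prob_space \<pi> by (rule pi_prob)
  interpret pp: pair_prob_space \<nu> \<pi> ..
  have "distr (J 0) M Yp = distr (\<nu> \<Otimes>\<^sub>M \<pi>) M (Yp \<circ> init)"
    by (simp add: J_def J0_def distr_distr[OF Yp_meas init_meas])
  also have "\<dots> = distr (\<nu> \<Otimes>\<^sub>M \<pi>) \<pi> snd"
    by (rule distr_cong) (auto simp: pi_sets Yp_def sy_def scp_def init_def)
  also have "\<dots> = \<pi>"
  proof (rule measure_eqI)
    show "sets (distr (\<nu> \<Otimes>\<^sub>M \<pi>) \<pi> snd) = sets \<pi>" by simp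
    fix A assume A: "A \<in> sets (distr (\<nu> \<Otimes>\<^sub>M \<pi>) \<pi> snd)"
    then have A': "A \<in> sets \<pi>" by simp
    have "emeasure (distr (\<nu> \<Otimes>\<^sub>M \<pi>) \<pi> snd) A = emeasure (\<nu> \<Otimes>\<^sub>M \<pi>) (space \<nu> \<times> A)"
      using A' sets.sets_into_space[OF A']
      by (subst emeasure_distr) (auto simp: space_pair_measure intro!: arg_cong2[where f=emeasure])
    also have "\<dots> = emeasure \<pi> A"
      using A' p2.emeasure_pair_measure_Times[of "space \<nu>" \<nu> A] p1.emeasure_space_1 by simp
    finally show "emeasure (distr (\<nu> \<Otimes>\<^sub>M \<pi>) \<pi> snd) A = emeasure \<pi> A" .
  qed
  finally show ?case .
next
  case (Suc n)
  show ?case using distr_J_Suc[OF Yp_meas margY] Suc by (simp add: pi_stat)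
qed


definition "alpha = (1 + d) / (1 + 2 * b + lam * d)"
definition "Lam = 1 + 2 * (lam * d + b)"

lemma d_pos: "0 < d"
proof -
  have "0 \<le> 2 * b / (1 - lam)" using b lam by simp
  then show ?thesis using d by linarith
qed

lemma den_pos: "0 < 1 + 2 * b + lam * d" using b lam d_pos by (simp add: add_pos_nonneg)

lemma alpha_gt1: "1 < alpha"
proof -
  have "2 * b < d * (1 - lam)" using d lam by (simp add: field_simps)
  then have "1 + 2 * b + lam * d < 1 + d" by (simp add: algebra_simps)
  then show ?thesis unfolding alpha_def using den_pos by simp
qed

lemma Lam_ge1: "1 \<le> Lam" unfolding Lam_def using lam b d_pos by simp

lemma ineq1:
  assumes sd: "d \<le> t"
  shows "1 + lam * t + 2 * b \<le> (1 + t) / alpha"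
proof -
  have "(1 + 2 * b + lam * t) * (1 + d) \<le> (1 + 2 * b + lam * d) * (1 + t)"
  proof -
    have "0 \<le> (1 + 2 * b - lam) * (t - d)" using sd lam b by simp
    then show ?thesis by (simp add: algebra_simps)
  qed
  then show ?thesis unfolding alpha_def using den_pos d_pos sd
    by (simp add: field_simps)
qed

lemma ineq2:
  assumes "j \<le> n" "j \<le> m"
  shows "1 / Lam ^ m \<le> alpha ^ n / (alpha * Lam) ^ j"
proof -
  have "alpha ^ j \<le> alpha ^ n" using alpha_gt1 assms(1) by (intro power_increasing) auto
  have "Lam ^ j \<le> Lam ^ m" using Lam_ge1 assms(2) by (intro power_increasing) auto
  have p: "0 < alpha" "0 < Lam" using alpha_gt1 Lam_ge1 by auto
  have "1 / Lam ^ m \<le> 1 / Lam ^ j" using \<open>Lam ^ j \<le> Lam ^ m\<close> p by (simp add: frac_le)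
  also have "\<dots> = alpha ^ j / (alpha * Lam) ^ j" using p by (simp add: power_mult_distrib)
  also have "\<dots> \<le> alpha ^ n / (alpha * Lam) ^ j" using \<open>alpha ^ j \<le> alpha ^ n\<close> p
    by (simp add: divide_right_mono)
  finally show ?thesis .
qed

definition W :: "nat \<Rightarrow> nat \<Rightarrow> 'a \<times> 'a \<times> nat \<times> bool \<times> bool \<Rightarrow> ennreal" where
  "W m n s = (if \<not> scp s \<and> sal s \<and> sj s < m
     then ennreal (alpha ^ n / (alpha * Lam) ^ sj s * (1 + f (sx s) + f (sy s)))
     else ennreal (1 / Lam ^ m))"

lemma W_meas[measurable]: "W m n \<in> borel_measurable S"
  unfolding W_def using f_meas by measurable

lemma J_int_Suc:
  assumes g: "g \<in> borel_measurable S"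
  shows "(\<integral>\<^sup>+s. g s \<partial>J (Suc n)) = (\<integral>\<^sup>+s. (\<integral>\<^sup>+t. g t \<partial>K s) \<partial>J n)"
  unfolding J_Suc
  by (rule nn_integral_bind[OF g]) (simp add: measurable_cong_sets[OF J_sets refl] K_kernel_sub)

lemma K_int: assumes s: "s \<in> space S" and g: "g \<in> borel_measurable S"
  shows "(\<integral>\<^sup>+t. g t \<partial>K s) = (\<integral>\<^sup>+w. g (Gm s w) \<partial>Nz s)"
  unfolding K_def using g by (simp add: nn_integral_distr[OF Gm_meas1[OF s]])

lemma ennreal_3: "0 \<le> x \<Longrightarrow> 0 \<le> y \<Longrightarrow> ennreal (1 + x + y) = 1 + ennreal x + ennreal y"
  by (metis ennreal_1 ennreal_plus add_nonneg_nonneg zero_le_one)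

lemma K_int_mono:
  assumes s: "s \<in> space S" and g: "g \<in> borel_measurable S" and h: "h \<in> borel_measurable S"
    and le: "\<And>w. w \<in> space NS \<Longrightarrow> g (Gm s w) \<le> h (Gm s w)"
  shows "(\<integral>\<^sup>+t. g t \<partial>K s) \<le> (\<integral>\<^sup>+t. h t \<partial>K s)"
  unfolding K_int[OF s g] K_int[OF s h]
  by (rule nn_integral_mono) (use le sets_eq_imp_space_eq[OF Nz_sets[OF s]] in auto)

lemma K_int_const: "s \<in> space S \<Longrightarrow> (\<integral>\<^sup>+t. c \<partial>K s) = c"
  using prob_space.emeasure_space_1[OF K_prob] by (simp add: nn_integral_const)

lemma Gm_space: "s \<in> space S \<Longrightarrow> w \<in> space NS \<Longrightarrow> Gm s w \<in> space S"
  using measurable_space[OF Gm_meas1] sets_eq_imp_space_eq[OF Nz_sets] by blast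

lemma K_int_h:
  assumes s: "s \<in> space S" and be: "0 \<le> be"
  shows "(\<integral>\<^sup>+t. ennreal (be * (1 + f (sx t) + f (Yp t))) \<partial>K s)
     = ennreal be * (1 + (\<integral>\<^sup>+x. ennreal (f x) \<partial>P (sx s)) + (\<integral>\<^sup>+x. ennreal (f x) \<partial>P (Yp s)))"
proof -
  have ks: "space (K s) = space S" using K_sets[OF s] by (rule sets_eq_imp_space_eq)
  have "(\<integral>\<^sup>+t. ennreal (be * (1 + f (sx t) + f (Yp t))) \<partial>K s)
      = (\<integral>\<^sup>+t. ennreal be * (1 + ennreal (f (sx t)) + ennreal (f (Yp t))) \<partial>K s)"
  proof (rule nn_integral_cong)
    fix t assume "t \<in> space (K s)"
    then have "sx t \<in> space M" "Yp t \<in> space M" using s_facts ks by auto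
    then have "0 \<le> f (sx t)" "0 \<le> f (Yp t)" using f_nonneg by auto
    then show "ennreal (be * (1 + f (sx t) + f (Yp t))) = ennreal be * (1 + ennreal (f (sx t)) + ennreal (f (Yp t)))"
      using be by (simp add: ennreal_mult ennreal_3)
  qed
  also have "\<dots> = ennreal be * (\<integral>\<^sup>+t. (1 + ennreal (f (sx t)) + ennreal (f (Yp t))) \<partial>K s)"
    by (rule nn_integral_cmult) (subst measurable_cong_sets[OF K_sets[OF s] refl], measurable)
  also have "(\<integral>\<^sup>+t. (1 + ennreal (f (sx t)) + ennreal (f (Yp t))) \<partial>K s)
      = (\<integral>\<^sup>+t. 1 \<partial>K s) + (\<integral>\<^sup>+t. ennreal (f (sx t)) \<partial>K s) + (\<integral>\<^sup>+t. ennreal (f (Yp t)) \<partial>K s)"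
    by (simp add: nn_integral_add measurable_cong_sets[OF K_sets[OF s] refl] f_meas)
  also have "(\<integral>\<^sup>+t. ennreal (f (sx t)) \<partial>K s) = (\<integral>\<^sup>+x. ennreal (f x) \<partial>P (sx s))"
    unfolding margX[OF s, symmetric]
    by (rule nn_integral_distr[symmetric]) (simp_all add: measurable_cong_sets[OF K_sets[OF s] refl] f_meas)
  also have "(\<integral>\<^sup>+t. ennreal (f (Yp t)) \<partial>K s) = (\<integral>\<^sup>+x. ennreal (f x) \<partial>P (Yp s))"
    unfolding margY[OF s, symmetric]
    by (rule nn_integral_distr[symmetric]) (simp_all add: measurable_cong_sets[OF K_sets[OF s] refl] f_meas)
  finally show ?thesis using K_int_const[OF s, of 1] by simp
qed


lemma f_space: "x \<in> space M \<Longrightarrow> 0 \<le> f x" using f_nonneg by auto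

lemma W_le:
  assumes t: "t \<in> space S" and c0: "1 / Lam ^ m \<le> be"
    and g: "\<not> scp t \<and> sal t \<and> sj t < m \<Longrightarrow> alpha ^ N / (alpha * Lam) ^ sj t \<le> be"
  shows "W m N t \<le> ennreal (be * (1 + f (sx t) + f (Yp t)))"
proof -
  have f0: "0 \<le> f (sx t)" "0 \<le> f (Yp t)" "0 \<le> f (sy t)" using s_facts[OF t] f_space by (auto simp: space_S sy_def t)
  have be0: "0 \<le> be" using c0 Lam_ge1 by (smt (verit) divide_nonneg_nonneg zero_le_power)
  show ?thesis
  proof (cases "\<not> scp t \<and> sal t \<and> sj t < m")
    case True
    then have "Yp t = sy t" by (simp add: Yp_def)
    moreover have le: "alpha ^ N / (alpha * Lam) ^ sj t * (1 + f (sx t) + f (sy t)) \<le> be * (1 + f (sx t) + f (sy t))"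
      using g[OF True] f0 by (intro mult_right_mono) auto
    moreover have "W m N t = ennreal (alpha ^ N / (alpha * Lam) ^ sj t * (1 + f (sx t) + f (sy t)))"
      unfolding W_def by (rule if_P[OF True])
    ultimately show ?thesis using ennreal_leI[OF le] by simp
  next
    case False
    have "1 / Lam ^ m \<le> be * (1 + f (sx t) + f (Yp t))"
      using c0 be0 f0 by (smt (verit) mult_left_mono mult_cancel_left1)
    moreover have "W m N t = ennreal (1 / Lam ^ m)" unfolding W_def by (rule if_not_P[OF False])
    ultimately show ?thesis using ennreal_leI by simp
  qed
qed

lemma W_step:
  assumes s: "s \<in> space S" and jn: "sj s \<le> n"
  shows "(\<integral>\<^sup>+t. W m (Suc n) t \<partial>K s) \<le> W m n s"
proof -
  let ?c0 = "1 / Lam ^ m"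
  have sxs: "sx s \<in> space M" "sy s \<in> space M" "Yp s \<in> space M" using s_facts[OF s] by auto
  have fx: "0 \<le> f (sx s)" "0 \<le> f (sy s)" using sxs f_space by auto
  have ap: "0 < alpha" "0 < Lam" using alpha_gt1 Lam_ge1 by auto
  have Gm_simp: "Gm s w = (if scp s then (fst (snd (snd w)), fst (snd (snd w)), nj s, nal s, True)
     else if fst w then (fst (snd w), fst (snd w), nj s, nal s, True)
     else (fst (snd (snd w)), snd (snd (snd w)), nj s, nal s, False))" for w
    by (cases w) (auto simp: Gm_def)
  show ?thesis
  proof (cases "\<not> scp s \<and> sal s \<and> sj s < m")
    case False
    have "(\<integral>\<^sup>+t. W m (Suc n) t \<partial>K s) \<le> (\<integral>\<^sup>+t. ennreal ?c0 \<partial>K s)"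
    proof (rule K_int_mono[OF s W_meas])
      fix w assume w: "w \<in> space NS"
      have "nj s \<ge> sj s" by (simp add: nj_def)
      then show "W m (Suc n) (Gm s w) \<le> ennreal ?c0"
        using False by (auto simp: W_def Gm_simp sj_def scp_def sal_def nal_def)
    qed simp
    also have "\<dots> = W m n s" unfolding K_int_const[OF s] W_def by (rule if_not_P[OF False, symmetric])
    finally show ?thesis .
  next
    case good: True
    have Yps: "Yp s = sy s" using good by (simp add: Yp_def)
    have Wn: "W m n s = ennreal (alpha ^ n / (alpha * Lam) ^ sj s * (1 + f (sx s) + f (sy s)))"
      using good by (simp add: W_def)
    have c0n: "?c0 \<le> alpha ^ n / (alpha * Lam) ^ sj s" using ineq2 jn good by auto
    show ?thesis
    proof (cases "sx s \<in> R0 \<and> sy s \<in> R0")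
      case False
      then have nal: "\<not> nal s" by (simp add: nal_def Yps)
      have "(\<integral>\<^sup>+t. W m (Suc n) t \<partial>K s) \<le> (\<integral>\<^sup>+t. ennreal ?c0 \<partial>K s)"
      proof (rule K_int_mono[OF s W_meas])
        fix w assume w: "w \<in> space NS"
        show "W m (Suc n) (Gm s w) \<le> ennreal ?c0"
          using nal by (auto simp: W_def Gm_simp sj_def scp_def sal_def)
      qed simp
      also have "\<dots> = ennreal ?c0" using K_int_const[OF s] by simp
      also have "\<dots> \<le> W m n s" unfolding Wn
      proof (rule ennreal_leI)
        have "?c0 * 1 \<le> alpha ^ n / (alpha * Lam) ^ sj s * (1 + f (sx s) + f (sy s))"
          using c0n fx ap by (intro mult_mono) (auto intro: divide_nonneg_nonneg)
        then show "?c0 \<le> alpha ^ n / (alpha * Lam) ^ sj s * (1 + f (sx s) + f (sy s))" by simp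
      qed
      finally show ?thesis .
    next
      case inR0: True
      then have nal: "nal s" using good by (simp add: nal_def Yps)
      define be where "be = (if pc s then alpha ^ Suc n / (alpha * Lam) ^ (Suc (sj s)) else alpha ^ Suc n / (alpha * Lam) ^ sj s)"
      have njs: "nj s = (if pc s then Suc (sj s) else sj s)"
        using good by (simp add: nj_def pc_def Yps)
      have i1: "?c0 \<le> alpha ^ Suc n / (alpha * Lam) ^ (Suc (sj s))" using jn good by (intro ineq2) auto
      have i2: "?c0 \<le> alpha ^ Suc n / (alpha * Lam) ^ sj s" using jn good by (intro ineq2) auto
      have be_c0: "?c0 \<le> be" unfolding be_def using i1 i2 by (simp only: split: if_split) simp
      have be0: "0 \<le> be" unfolding be_def using ap by simp
      have "(\<integral>\<^sup>+t. W m (Suc n) t \<partial>K s) \<le> (\<integral>\<^sup>+t. ennreal (be * (1 + f (sx t) + f (Yp t))) \<partial>K s)"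
      proof (rule K_int_mono[OF s W_meas])
        fix w assume w: "w \<in> space NS"
        show "W m (Suc n) (Gm s w) \<le> ennreal (be * (1 + f (sx (Gm s w)) + f (Yp (Gm s w))))"
        proof (rule W_le[OF Gm_space[OF s w] be_c0])
          assume "\<not> scp (Gm s w) \<and> sal (Gm s w) \<and> sj (Gm s w) < m"
          then have "sj (Gm s w) = nj s" using good by (auto simp: Gm_simp scp_def sj_def)
          then show "alpha ^ Suc n / (alpha * Lam) ^ sj (Gm s w) \<le> be" by (simp add: be_def njs)
        qed
      qed (use f_meas in measurable)
      also have "\<dots> = ennreal be * (1 + (\<integral>\<^sup>+x. ennreal (f x) \<partial>P (sx s)) + (\<integral>\<^sup>+x. ennreal (f x) \<partial>P (Yp s)))"
        by (rule K_int_h[OF s be0])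
      also have "\<dots> \<le> ennreal be * (1 + ennreal (lam * f (sx s) + b) + ennreal (lam * f (sy s) + b))"
        using drift inR0 Yps by (intro mult_left_mono add_mono) auto
      also have "\<dots> = ennreal (be * (1 + (lam * f (sx s) + b) + (lam * f (sy s) + b)))"
      proof -
        have u: "0 \<le> lam * f (sx s) + b" "0 \<le> lam * f (sy s) + b" using fx lam b by auto
        then have w: "0 \<le> 1 + (lam * f (sx s) + b) + (lam * f (sy s) + b)" by simp
        show ?thesis unfolding ennreal_mult[OF be0 w] ennreal_3[OF u] ..
      qed
      also have "\<dots> \<le> W m n s" unfolding Wn
      proof (rule ennreal_leI)
        show "be * (1 + (lam * f (sx s) + b) + (lam * f (sy s) + b)) \<le> alpha ^ n / (alpha * Lam) ^ sj s * (1 + f (sx s) + f (sy s))"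
        proof (cases "pc s")
          case True
          then have "f (sx s) \<le> d" "f (sy s) \<le> d" by (auto simp: pc_def RR_def)
          then have "1 + (lam * f (sx s) + b) + (lam * f (sy s) + b) \<le> Lam"
            unfolding Lam_def using lam by (smt (verit) mult_left_mono)
          then have "be * (1 + (lam * f (sx s) + b) + (lam * f (sy s) + b)) \<le> be * Lam"
            using be0 by (rule mult_left_mono)
          also have "be * Lam = alpha ^ n / (alpha * Lam) ^ sj s"
            using True ap by (simp add: be_def field_simps)
          also have "\<dots> \<le> alpha ^ n / (alpha * Lam) ^ sj s * (1 + f (sx s) + f (sy s))"
          proof -
            have "0 \<le> alpha ^ n / (alpha * Lam) ^ sj s" using ap by simp
            then have "alpha ^ n / (alpha * Lam) ^ sj s * 1 \<le> alpha ^ n / (alpha * Lam) ^ sj s * (1 + f (sx s) + f (sy s))"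
              using fx by (intro mult_left_mono) auto
            then show ?thesis by simp
          qed
          finally show ?thesis .
        next
          case False
          then have "d < f (sx s) \<or> d < f (sy s)" using good sxs by (auto simp: pc_def RR_def)
          then have t: "d \<le> f (sx s) + f (sy s)" using fx by auto
          have "1 + (lam * f (sx s) + b) + (lam * f (sy s) + b) = 1 + lam * (f (sx s) + f (sy s)) + 2 * b"
            by (simp add: algebra_simps)
          also have "\<dots> \<le> (1 + (f (sx s) + f (sy s))) / alpha" by (rule ineq1[OF t])
          finally have "be * (1 + (lam * f (sx s) + b) + (lam * f (sy s) + b)) \<le> be * ((1 + (f (sx s) + f (sy s))) / alpha)"
            using be0 by (rule mult_left_mono)
          also have "\<dots> = alpha ^ n / (alpha * Lam) ^ sj s * (1 + f (sx s) + f (sy s))"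
            using False ap by (simp add: be_def field_simps)
          finally show ?thesis .
        qed
      qed
      finally show ?thesis .
    qed
  qed
qed


lemma sj_Gm: "s \<in> space S \<Longrightarrow> sj (Gm s w) \<le> Suc (sj s)"
  by (cases w) (auto simp: Gm_def sj_def nj_def)

definition "Vb n s = (if n < sj s then 1 else 0 :: ennreal)"

lemma Vb_meas[measurable]: "Vb n \<in> borel_measurable S" unfolding Vb_def by measurable

lemma Vb_zero: "(\<integral>\<^sup>+s. Vb n s \<partial>J n) = 0"
proof (induction n)
  case 0
  have "(\<integral>\<^sup>+s. Vb 0 s \<partial>J 0) = (\<integral>\<^sup>+z. Vb 0 (init z) \<partial>(\<nu> \<Otimes>\<^sub>M \<pi>))"
    by (simp add: J_def J0_def nn_integral_distr[OF init_meas])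
  also have "\<dots> = 0" by (simp add: Vb_def init_def sj_def)
  finally show ?case .
next
  case (Suc n)
  have "(\<integral>\<^sup>+s. Vb (Suc n) s \<partial>J (Suc n)) = (\<integral>\<^sup>+s. (\<integral>\<^sup>+t. Vb (Suc n) t \<partial>K s) \<partial>J n)"
    by (rule J_int_Suc) simp
  also have "\<dots> \<le> (\<integral>\<^sup>+s. Vb n s \<partial>J n)"
  proof (rule nn_integral_mono)
    fix s assume "s \<in> space (J n)"
    then have s: "s \<in> space S" by (simp add: J_spaceS)
    have "(\<integral>\<^sup>+t. Vb (Suc n) t \<partial>K s) \<le> (\<integral>\<^sup>+t. Vb n s \<partial>K s)"
    proof (rule K_int_mono[OF s])
      fix w assume w: "w \<in> space NS"
      show "Vb (Suc n) (Gm s w) \<le> Vb n s" using sj_Gm[OF s, of w] by (simp add: Vb_def)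
    qed simp_all
    also have "\<dots> = Vb n s" by (rule K_int_const[OF s])
    finally show "(\<integral>\<^sup>+t. Vb (Suc n) t \<partial>K s) \<le> Vb n s" .
  qed
  finally show ?case using Suc by simp
qed

lemma AE_sj: "AE s in J n. sj s \<le> n"
proof -
  have "AE s in J n. Vb n s = 0"
    using Vb_zero[of n] by (subst (asm) nn_integral_0_iff_AE) (simp_all add: measurable_cong_sets[OF J_sets refl])
  then show ?thesis by eventually_elim (auto simp: Vb_def split: if_splits)
qed

lemma W_chain_step: "(\<integral>\<^sup>+s. W m (Suc n) s \<partial>J (Suc n)) \<le> (\<integral>\<^sup>+s. W m n s \<partial>J n)"
proof -
  have "(\<integral>\<^sup>+s. W m (Suc n) s \<partial>J (Suc n)) = (\<integral>\<^sup>+s. (\<integral>\<^sup>+t. W m (Suc n) t \<partial>K s) \<partial>J n)"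
    by (rule J_int_Suc) simp
  also have "\<dots> \<le> (\<integral>\<^sup>+s. W m n s \<partial>J n)"
  proof (rule nn_integral_mono_AE)
    show "AE s in J n. (\<integral>\<^sup>+t. W m (Suc n) t \<partial>K s) \<le> W m n s"
      using AE_sj[of n] AE_space[of "J n"]
      by eventually_elim (auto simp: J_spaceS intro!: W_step)
  qed
  finally show ?thesis .
qed

lemma W_chain: "(\<integral>\<^sup>+s. W m n s \<partial>J n) \<le> (\<integral>\<^sup>+s. W m 0 s \<partial>J 0)"
  by (induction n) (auto intro: order_trans[OF W_chain_step])

lemma pair_fst_int:
  assumes g: "g \<in> borel_measurable M"
  shows "(\<integral>\<^sup>+z. g (fst z) \<partial>(\<nu> \<Otimes>\<^sub>M \<pi>)) = (\<integral>\<^sup>+x. g x \<partial>\<nu>)"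
proof -
  have gm: "g \<in> borel_measurable \<nu>" using g by (simp add: measurable_cong_sets[OF nu_sets refl])
  have "(\<integral>\<^sup>+x. g x \<partial>\<nu>) = (\<integral>\<^sup>+x. g x \<partial>distr (\<nu> \<Otimes>\<^sub>M \<pi>) \<nu> fst)"
    by (simp add: prob_space.distr_pair_fst[OF pi_prob])
  also have "\<dots> = (\<integral>\<^sup>+z. g (fst z) \<partial>(\<nu> \<Otimes>\<^sub>M \<pi>))"
    by (rule nn_integral_distr) (simp_all add: gm)
  finally show ?thesis by simp
qed

lemma distr_pair_snd': "distr (\<nu> \<Otimes>\<^sub>M \<pi>) \<pi> snd = \<pi>"
proof (rule measure_eqI)
  interpret p1: prob_space \<nu> by (rule nu_prob)
  interpret p2: prob_space \<pi> by (rule pi_prob)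
  show "sets (distr (\<nu> \<Otimes>\<^sub>M \<pi>) \<pi> snd) = sets \<pi>" by simp
  fix A assume A: "A \<in> sets (distr (\<nu> \<Otimes>\<^sub>M \<pi>) \<pi> snd)"
  then have A': "A \<in> sets \<pi>" by simp
  have "emeasure (distr (\<nu> \<Otimes>\<^sub>M \<pi>) \<pi> snd) A = emeasure (\<nu> \<Otimes>\<^sub>M \<pi>) (space \<nu> \<times> A)"
    using A' sets.sets_into_space[OF A']
    by (subst emeasure_distr) (auto simp: space_pair_measure intro!: arg_cong2[where f=emeasure])
  also have "\<dots> = emeasure \<pi> A"
    using A' p2.emeasure_pair_measure_Times[of "space \<nu>" \<nu> A] p1.emeasure_space_1 by simp
  finally show "emeasure (distr (\<nu> \<Otimes>\<^sub>M \<pi>) \<pi> snd) A = emeasure \<pi> A" .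
qed

lemma pair_snd_int:
  assumes g: "g \<in> borel_measurable M"
  shows "(\<integral>\<^sup>+z. g (snd z) \<partial>(\<nu> \<Otimes>\<^sub>M \<pi>)) = (\<integral>\<^sup>+x. g x \<partial>\<pi>)"
proof -
  have gm: "g \<in> borel_measurable \<pi>" using g by (simp add: measurable_cong_sets[OF pi_sets refl])
  have "(\<integral>\<^sup>+x. g x \<partial>\<pi>) = (\<integral>\<^sup>+x. g x \<partial>distr (\<nu> \<Otimes>\<^sub>M \<pi>) \<pi> snd)"
    by (simp add: distr_pair_snd')
  also have "\<dots> = (\<integral>\<^sup>+z. g (snd z) \<partial>(\<nu> \<Otimes>\<^sub>M \<pi>))"
    by (rule nn_integral_distr) (simp_all add: gm)
  finally show ?thesis by simp
qed

lemma W_init: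
  assumes m: "0 < m"
  shows "(\<integral>\<^sup>+s. W m 0 s \<partial>J 0) \<le> 1 + (\<integral>\<^sup>+x. ennreal (f x) \<partial>\<nu>) + ennreal (b / (1 - lam))"
proof -
  let ?NP = "\<nu> \<Otimes>\<^sub>M \<pi>"
  define A where "A z = ennreal (f (fst z))" for z :: "'a \<times> 'a"
  define B where "B z = indicator R0 (snd z) * ennreal (f (snd z))" for z :: "'a \<times> 'a"
  have sp: "space ?NP = space M \<times> space M"
    using sets_eq_imp_space_eq[OF NP_sets] space_pair_measure[of M M] by simp
  have mA: "A \<in> borel_measurable ?NP"
    unfolding A_def by (subst measurable_cong_sets[OF NP_sets refl]) measurable
  have mB: "B \<in> borel_measurable ?NP"
    unfolding B_def by (subst measurable_cong_sets[OF NP_sets refl]) measurable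
  have e1: "(\<integral>\<^sup>+s. W m 0 s \<partial>J 0) = (\<integral>\<^sup>+z. W m 0 (init z) \<partial>?NP)"
    unfolding J_def kstep_0 J0_def by (rule nn_integral_distr[OF init_meas]) (simp add: W_meas)
  have pw: "W m 0 (init z) \<le> 1 + A z + B z" if z: "z \<in> space ?NP" for z
  proof -
    have "z \<in> space M \<times> space M" using z unfolding sp .
    then have z': "fst z \<in> space M" "snd z \<in> space M" by (auto simp: mem_Times_iff)
    then have f0: "0 \<le> f (fst z)" "0 \<le> f (snd z)" using f_space by auto
    show ?thesis
    proof (cases "fst z \<in> R0 \<and> snd z \<in> R0")
      case True
      have "W m 0 (init z) = ennreal (1 + f (fst z) + f (snd z))"
        using True m unfolding W_def init_def scp_def sal_def sj_def sx_def sy_def by simp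
      also have "\<dots> = 1 + A z + B z"
      proof -
        have "B z = ennreal (f (snd z))" using True unfolding B_def by simp
        then show ?thesis unfolding A_def by (simp only: ennreal_3[OF f0])
      qed
      finally show ?thesis by (rule eq_refl)
    next
      case False
      have c0: "1 / Lam ^ m \<le> 1" using Lam_ge1 by (simp add: divide_le_eq_1 one_le_power)
      have "W m 0 (init z) = ennreal (1 / Lam ^ m)"
        unfolding W_def init_def scp_def sal_def sj_def using False by auto
      also have "ennreal (1 / Lam ^ m) \<le> 1" using c0 by (simp add: ennreal_le_1)
      also have "(1::ennreal) \<le> 1 + A z + B z" by (intro add_increasing2) auto
      finally show ?thesis .
    qed
  qed
  have e2: "(\<integral>\<^sup>+z. W m 0 (init z) \<partial>?NP) \<le> (\<integral>\<^sup>+z. (1 + A z + B z) \<partial>?NP)"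
    by (rule nn_integral_mono) (rule pw)
  have e3: "(\<integral>\<^sup>+z. (1 + A z + B z) \<partial>?NP) = (\<integral>\<^sup>+z. (1 + A z) \<partial>?NP) + (\<integral>\<^sup>+z. B z \<partial>?NP)"
    by (intro nn_integral_add borel_measurable_add mA mB) auto
  have e4: "(\<integral>\<^sup>+z. (1 + A z) \<partial>?NP) = (\<integral>\<^sup>+z. 1 \<partial>?NP) + (\<integral>\<^sup>+z. A z \<partial>?NP)"
    by (intro nn_integral_add mA) auto
  have e5: "(\<integral>\<^sup>+z. 1 \<partial>?NP) = 1"
    using prob_space.emeasure_space_1[OF NP_prob] by simp
  have e6: "(\<integral>\<^sup>+z. A z \<partial>?NP) = (\<integral>\<^sup>+x. ennreal (f x) \<partial>\<nu>)"
    unfolding A_def by (rule pair_fst_int) simp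
  have e7: "(\<integral>\<^sup>+z. B z \<partial>?NP) = (\<integral>\<^sup>+x\<in>R0. ennreal (f x) \<partial>\<pi>)"
    unfolding B_def by (subst pair_snd_int[symmetric]) (simp_all add: mult.commute)
  have "(\<integral>\<^sup>+s. W m 0 s \<partial>J 0) \<le> 1 + (\<integral>\<^sup>+x. ennreal (f x) \<partial>\<nu>) + (\<integral>\<^sup>+x\<in>R0. ennreal (f x) \<partial>\<pi>)"
    using e2 unfolding e1 e3 e4 e5 e6 e7 .
  also have "\<dots> \<le> 1 + (\<integral>\<^sup>+x. ennreal (f x) \<partial>\<nu>) + ennreal (b / (1 - lam))"
    using Ipi by (rule add_left_mono)
  finally show ?thesis .
qed


definition Phi :: "'a \<times> 'a \<times> nat \<times> bool \<times> bool \<Rightarrow> ennreal" where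
  "Phi s = (if scp s then 0 else inverse (ennreal (1 - \<epsilon>)) ^ sj s)"

lemma Phi_meas[measurable]: "Phi \<in> borel_measurable S"
proof -
  have g: "(\<lambda>n::nat. inverse (ennreal (1 - \<epsilon>)) ^ n) \<in> count_space UNIV \<rightarrow>\<^sub>M borel" by simp
  have "(\<lambda>s. inverse (ennreal (1 - \<epsilon>)) ^ sj s) \<in> borel_measurable S"
    by (rule measurable_compose[OF sj_meas g])
  moreover have "{s \<in> space S. scp s} \<in> sets S" by simp
  ultimately show ?thesis unfolding Phi_def by (intro measurable_If) auto
qed

lemma inv_ineq: "ennreal (1 - \<epsilon>) * inverse (ennreal (1 - \<epsilon>)) ^ Suc j \<le> inverse (ennreal (1 - \<epsilon>)) ^ j"
proof (cases "\<epsilon> = 1")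
  case True then show ?thesis by simp
next
  case False
  then have t: "0 < 1 - \<epsilon>" using eps by simp
  have "ennreal (1 - \<epsilon>) * inverse (ennreal (1 - \<epsilon>)) ^ Suc j = ennreal ((1 - \<epsilon>) * inverse (1 - \<epsilon>) ^ Suc j)"
    using t by (simp add: inverse_ennreal ennreal_mult ennreal_power)
  also have "(1 - \<epsilon>) * inverse (1 - \<epsilon>) ^ Suc j = inverse (1 - \<epsilon>) ^ j"
    using t by (simp add: field_simps)
  also have "ennreal (inverse (1 - \<epsilon>) ^ j) = inverse (ennreal (1 - \<epsilon>)) ^ j"
    using t by (simp add: inverse_ennreal ennreal_power)
  finally show ?thesis by simp
qed

lemma Phi_step: assumes s: "s \<in> space S" shows "(\<integral>\<^sup>+t. Phi t \<partial>K s) \<le> Phi s"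
proof -
  have Gm_simp: "Gm s w = (if scp s then (fst (snd (snd w)), fst (snd (snd w)), nj s, nal s, True)
     else if fst w then (fst (snd w), fst (snd w), nj s, nal s, True)
     else (fst (snd (snd w)), snd (snd (snd w)), nj s, nal s, False))" for w
    by (cases w) (auto simp: Gm_def)
  show ?thesis
  proof (cases "scp s")
    case True
    have "(\<integral>\<^sup>+t. Phi t \<partial>K s) \<le> (\<integral>\<^sup>+t. 0 \<partial>K s)"
    proof (rule K_int_mono[OF s Phi_meas])
      fix w show "Phi (Gm s w) \<le> 0" using True by (cases w) (simp add: Phi_def Gm_def scp_def)
    qed simp
    then show ?thesis by simp
  next
    case nc: False
    show ?thesis
    proof (cases "pc s")
      case False
      have njs: "nj s = sj s" using nc False by (simp add: nj_def pc_def Yp_def)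
      have "(\<integral>\<^sup>+t. Phi t \<partial>K s) \<le> (\<integral>\<^sup>+t. Phi s \<partial>K s)"
      proof (rule K_int_mono[OF s Phi_meas])
        fix w show "Phi (Gm s w) \<le> Phi s" using nc by (cases w) (simp add: Phi_def Gm_def scp_def sj_def njs)
      qed simp
      then show ?thesis using K_int_const[OF s] by simp
    next
      case True
      then have rr: "sx s \<in> RR" "sy s \<in> RR" by (auto simp: pc_def)
      have njs: "nj s = Suc (sj s)" using nc True by (simp add: nj_def pc_def Yp_def)
      let ?c = "inverse (ennreal (1 - \<epsilon>)) ^ Suc (sj s)"
      let ?F = "{False} \<times> space M \<times> space M \<times> space M"
      have spN: "space (Nz s) = space NS" using Nz_sets[OF s] by (rule sets_eq_imp_space_eq)
      have "(\<integral>\<^sup>+t. Phi t \<partial>K s) = (\<integral>\<^sup>+w. Phi (Gm s w) \<partial>Nz s)" by (rule K_int[OF s Phi_meas])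
      also have "\<dots> = (\<integral>\<^sup>+w. ?c * indicator ?F w \<partial>Nz s)"
        by (rule nn_integral_cong) (use nc[unfolded scp_def] in \<open>auto simp: spN space_NS Phi_def Gm_simp scp_def sj_def njs split: split_indicator\<close>)
      also have "\<dots> = ?c * emeasure (Nz s) ?F"
        by (rule nn_integral_cmult_indicator) (simp add: Nz_sets[OF s] NS_def)
      also have "emeasure (Nz s) ?F = ennreal (1 - \<epsilon>)"
      proof -
        have N: "Nz s = B1 \<Otimes>\<^sub>M Q \<Otimes>\<^sub>M Rk (sx s) \<Otimes>\<^sub>M Rk (sy s)" using True by (simp add: Nz_def)
        have xs: "sx s \<in> space M" "sy s \<in> space M" using rr by (auto simp: RR_def)
        have sp: "space M \<in> sets M" by simp
        have e1: "emeasure (Rk (sx s)) (space M) = 1" "emeasure (Rk (sy s)) (space M) = 1" "emeasure Q (space M) = 1"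
          using prob_space.emeasure_space_1[OF Rk_prob[OF xs(1)]] prob_space.emeasure_space_1[OF Rk_prob[OF xs(2)]]
            prob_space.emeasure_space_1[OF Q_prob]
          by (simp_all add: sets_eq_imp_space_eq[OF Rk_sets[OF xs(1)]] sets_eq_imp_space_eq[OF Rk_sets[OF xs(2)]] sets_eq_imp_space_eq[OF Q_sets])
        show ?thesis unfolding N
          using em4[OF B_facts(1,2) Q_prob Q_sets Rk_prob[OF xs(1)] Rk_sets[OF xs(1)] Rk_prob[OF xs(2)] Rk_sets[OF xs(2)] sp sp sp, of "{False}"]
          by (simp only: e1 B_facts mult_1_right)
      qed
      also have "?c * ennreal (1 - \<epsilon>) \<le> Phi s"
        using inv_ineq[of "sj s"] nc by (simp add: Phi_def mult.commute)
      finally show ?thesis by simp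
    qed
  qed
qed

lemma Phi_chain: "(\<integral>\<^sup>+s. Phi s \<partial>J n) \<le> 1"
proof (induction n)
  case 0
  have "(\<integral>\<^sup>+s. Phi s \<partial>J 0) = (\<integral>\<^sup>+z. Phi (init z) \<partial>(\<nu> \<Otimes>\<^sub>M \<pi>))"
    unfolding J_def kstep_0 J0_def by (rule nn_integral_distr[OF init_meas]) (simp add: Phi_meas)
  also have "\<dots> = (\<integral>\<^sup>+z. 1 \<partial>(\<nu> \<Otimes>\<^sub>M \<pi>))"
    by (simp add: Phi_def init_def scp_def sj_def)
  also have "\<dots> = 1" using prob_space.emeasure_space_1[OF NP_prob] by simp
  finally show ?case by simp
next
  case (Suc n)
  have "(\<integral>\<^sup>+s. Phi s \<partial>J (Suc n)) = (\<integral>\<^sup>+s. (\<integral>\<^sup>+t. Phi t \<partial>K s) \<partial>J n)"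
    by (rule J_int_Suc) simp
  also have "\<dots> \<le> (\<integral>\<^sup>+s. Phi s \<partial>J n)"
    by (rule nn_integral_mono) (simp add: J_spaceS Phi_step)
  finally show ?case using Suc by simp
qed

definition "Dd s = (if sal s then 0 else 1 :: ennreal)"
definition "Oo s = (if sx s \<in> R0 \<and> Yp s \<in> R0 then 0 else 1 :: ennreal)"
definition "Dl s = (if \<not> sal s \<and> sx s \<in> R0 \<and> Yp s \<in> R0 then 1 else 0 :: ennreal)"

lemma DOD_meas[measurable]: "Dd \<in> borel_measurable S" "Oo \<in> borel_measurable S" "Dl \<in> borel_measurable S"
proof -
  have a: "{s \<in> space S. sal s} \<in> sets S" "{s \<in> space S. sx s \<in> R0 \<and> Yp s \<in> R0} \<in> sets S"
    "{s \<in> space S. \<not> sal s \<and> sx s \<in> R0 \<and> Yp s \<in> R0} \<in> sets S" by simp_all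
  show "Dd \<in> borel_measurable S" unfolding Dd_def by (intro measurable_If a) auto
  show "Oo \<in> borel_measurable S" unfolding Oo_def by (intro measurable_If a) auto
  show "Dl \<in> borel_measurable S" unfolding Dl_def by (intro measurable_If a) auto
qed

lemma Dd_step: assumes s: "s \<in> space S" shows "(\<integral>\<^sup>+t. Dd t \<partial>K s) \<le> Oo s + Dl s"
proof -
  have "(\<integral>\<^sup>+t. Dd t \<partial>K s) \<le> (\<integral>\<^sup>+t. (Oo s + Dl s) \<partial>K s)"
  proof (rule K_int_mono[OF s])
    fix w
    have "sal (Gm s w) = nal s" by (cases w) (auto simp: Gm_def sal_def)
    then show "Dd (Gm s w) \<le> Oo s + Dl s" by (auto simp: Dd_def Oo_def Dl_def nal_def)
  qed simp_all
  then show ?thesis using K_int_const[OF s] by simp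
qed

lemma Dd_J0: "(\<integral>\<^sup>+s. Dl s \<partial>J 0) = 0"
proof -
  have "(\<integral>\<^sup>+s. Dl s \<partial>J 0) = (\<integral>\<^sup>+z. Dl (init z) \<partial>(\<nu> \<Otimes>\<^sub>M \<pi>))"
    unfolding J_def kstep_0 J0_def by (rule nn_integral_distr[OF init_meas]) (simp add: DOD_meas)
  also have z: "(\<lambda>z. Dl (init z)) = (\<lambda>z. 0)" by (auto simp: Dl_def init_def sal_def sx_def sy_def Yp_def scp_def)
  finally show ?thesis by simp
qed

lemma Dd_Suc: "(\<integral>\<^sup>+s. Dd s \<partial>J (Suc n)) \<le> (\<integral>\<^sup>+s. Oo s \<partial>J n) + (\<integral>\<^sup>+s. Dl s \<partial>J n)"
proof -
  have "(\<integral>\<^sup>+s. Dd s \<partial>J (Suc n)) = (\<integral>\<^sup>+s. (\<integral>\<^sup>+t. Dd t \<partial>K s) \<partial>J n)"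
    by (rule J_int_Suc) simp
  also have "\<dots> \<le> (\<integral>\<^sup>+s. (Oo s + Dl s) \<partial>J n)"
    by (rule nn_integral_mono) (simp add: J_spaceS Dd_step)
  also have "\<dots> = (\<integral>\<^sup>+s. Oo s \<partial>J n) + (\<integral>\<^sup>+s. Dl s \<partial>J n)"
    by (rule nn_integral_add) (simp_all add: measurable_cong_sets[OF J_sets refl])
  finally show ?thesis .
qed

lemma Dd_chain: "(\<integral>\<^sup>+s. Dd s \<partial>J (Suc n)) \<le> (\<Sum>i\<le>n. (\<integral>\<^sup>+s. Oo s \<partial>J i))"
proof (induction n)
  case 0 then show ?case using Dd_Suc[of 0] Dd_J0 by simp
next
  case (Suc n)
  have "(\<integral>\<^sup>+s. Dl s \<partial>J (Suc n)) \<le> (\<integral>\<^sup>+s. Dd s \<partial>J (Suc n))"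
    by (rule nn_integral_mono) (simp add: Dl_def Dd_def)
  then have "(\<integral>\<^sup>+s. Dd s \<partial>J (Suc (Suc n))) \<le> (\<integral>\<^sup>+s. Oo s \<partial>J (Suc n)) + (\<Sum>i\<le>n. (\<integral>\<^sup>+s. Oo s \<partial>J i))"
    using Dd_Suc[of "Suc n"] Suc by (meson add_left_mono order_trans)
  then show ?case by (simp add: add.commute)
qed


lemma kstep_sets: "sets (kstep P n \<nu>) = sets M" and kstep_prob: "prob_space (kstep P n \<nu>)"
proof -
  have "kstep P n \<nu> \<in> space (prob_algebra M)"
    by (rule kstep_space[OF P_kernel]) (simp add: space_prob_algebra nu_sets nu_prob)
  then show "sets (kstep P n \<nu>) = sets M" "prob_space (kstep P n \<nu>)" by (simp_all add: space_prob_algebra)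
qed

lemma meas_X: "B \<in> sets M \<Longrightarrow> measure (kstep P n \<nu>) B = measure (J n) (sx -` B \<inter> space S)"
  using J_margX[of n] measure_distr[of sx "J n" M B] by (simp add: measurable_cong_sets[OF J_sets refl] J_spaceS)

lemma meas_Y: "B \<in> sets M \<Longrightarrow> measure \<pi> B = measure (J n) (Yp -` B \<inter> space S)"
  using J_margY[of n] measure_distr[of Yp "J n" M B] by (simp add: measurable_cong_sets[OF J_sets refl] J_spaceS)

lemma emeas_X: "B \<in> sets M \<Longrightarrow> emeasure (kstep P n \<nu>) B = emeasure (J n) (sx -` B \<inter> space S)"
  using J_margX[of n] emeasure_distr[of sx "J n" M B] by (simp add: measurable_cong_sets[OF J_sets refl] J_spaceS)

lemma emeas_Y: "B \<in> sets M \<Longrightarrow> emeasure \<pi> B = emeasure (J n) (Yp -` B \<inter> space S)"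
  using J_margY[of n] emeasure_distr[of Yp "J n" M B] by (simp add: measurable_cong_sets[OF J_sets refl] J_spaceS)

definition "Uset = {s \<in> space S. \<not> scp s}"

lemma Uset_meas[measurable]: "Uset \<in> sets S" unfolding Uset_def by simp

lemma tv_step: assumes B: "B \<in> sets M"
  shows "\<bar>measure (kstep P n \<nu>) B - measure \<pi> B\<bar> \<le> measure (J n) Uset"
proof -
  interpret Jn: prob_space "J n" by (rule J_prob)
  define X1 where "X1 = sx -` B \<inter> space S"
  define Y1 where "Y1 = Yp -` B \<inter> space S"
  have X1m: "X1 \<in> sets S" unfolding X1_def using B by measurable
  have Y1m: "Y1 \<in> sets S" unfolding Y1_def using B by measurable
  have eqd: "X1 - Uset = Y1 - Uset" unfolding X1_def Y1_def Uset_def by (auto simp: Yp_def)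
  have "measure (J n) (X1 - Uset) = measure (J n) X1 - measure (J n) (X1 \<inter> Uset)"
    by (rule Jn.finite_measure_Diff') (simp_all add: X1m)
  moreover have "measure (J n) (Y1 - Uset) = measure (J n) Y1 - measure (J n) (Y1 \<inter> Uset)"
    by (rule Jn.finite_measure_Diff') (simp_all add: Y1m)
  moreover have "measure (J n) (X1 \<inter> Uset) \<le> measure (J n) Uset"
    by (rule Jn.finite_measure_mono) auto
  moreover have "measure (J n) (Y1 \<inter> Uset) \<le> measure (J n) Uset"
    by (rule Jn.finite_measure_mono) auto
  moreover have "0 \<le> measure (J n) (X1 \<inter> Uset)" "0 \<le> measure (J n) (Y1 \<inter> Uset)" by simp_all
  moreover have "measure (kstep P n \<nu>) B = measure (J n) X1" unfolding X1_def by (rule meas_X[OF B])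
  moreover have "measure \<pi> B = measure (J n) Y1" unfolding Y1_def by (rule meas_Y[OF B])
  ultimately show ?thesis using eqd by (smt (verit))
qed

lemma tv_le: "tv_dist M (kstep P n \<nu>) \<pi> \<le> measure (J n) Uset"
  unfolding tv_dist_def
  by (rule cSUP_least) (auto intro: tv_step)


definition "Gset m = {s \<in> space S. \<not> scp s \<and> sal s \<and> sj s < m}"
definition "Hset m = {s \<in> space S. \<not> scp s \<and> m \<le> sj s}"
definition "Dset = {s \<in> space S. \<not> sal s}"

lemma GHD_meas[measurable]: "Gset m \<in> sets S" "Hset m \<in> sets S" "Dset \<in> sets S"
  unfolding Gset_def Hset_def Dset_def by simp_all

lemma U_split: "measure (J n) Uset \<le> measure (J n) (Gset m) + measure (J n) (Hset m) + measure (J n) Dset"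
proof -
  interpret Jn: prob_space "J n" by (rule J_prob)
  have "Uset \<subseteq> Gset m \<union> Hset m \<union> Dset" by (auto simp: Uset_def Gset_def Hset_def Dset_def)
  then have "measure (J n) Uset \<le> measure (J n) (Gset m \<union> Hset m \<union> Dset)"
    by (intro Jn.finite_measure_mono) simp_all
  also have "\<dots> \<le> measure (J n) (Gset m \<union> Hset m) + measure (J n) Dset"
    by (rule measure_subadditive) (simp_all add: Jn.emeasure_eq_measure)
  also have "measure (J n) (Gset m \<union> Hset m) \<le> measure (J n) (Gset m) + measure (J n) (Hset m)"
    by (rule measure_subadditive) (simp_all add: Jn.emeasure_eq_measure)
  finally show ?thesis by simp
qed

lemma H_bound: assumes m: "0 < m" shows "measure (J n) (Hset m) \<le> (1 - \<epsilon>) ^ m"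
proof -
  interpret Jn: prob_space "J n" by (rule J_prob)
  have Hs: "Hset m \<subseteq> space (J n)" by (auto simp: Hset_def J_spaceS)
  show ?thesis
  proof (cases "\<epsilon> = 1")
    case True
    have ph: "Phi s = top" if "s \<in> Hset m" for s
    proof -
      have "inverse (ennreal (1 - \<epsilon>)) = top" using True by simp
      moreover have "sj s \<noteq> 0" using that m by (auto simp: Hset_def)
      ultimately show ?thesis using that by (simp add: Phi_def Hset_def top_power_ennreal)
    qed
    have "(\<integral>\<^sup>+s. top * indicator (Hset m) s \<partial>J n) \<le> (\<integral>\<^sup>+s. Phi s \<partial>J n)"
      by (rule nn_integral_mono) (auto simp: ph split: split_indicator)
    also have "\<dots> \<le> 1" by (rule Phi_chain)
    finally have "top * emeasure (J n) (Hset m) \<le> 1"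
      by (simp add: nn_integral_cmult_indicator)
    then have "emeasure (J n) (Hset m) = 0" by (auto simp: ennreal_top_mult top_unique split: if_splits)
    then have "measure (J n) (Hset m) = 0" by (simp add: Jn.emeasure_eq_measure)
    then show ?thesis using True m by simp
  next
    case False
    then have t: "0 < 1 - \<epsilon>" using eps by simp
    define c where "c = inverse (1 - \<epsilon>)"
    have c1: "1 \<le> c" unfolding c_def using t eps by (simp add: one_le_inverse)
    have inv: "inverse (ennreal (1 - \<epsilon>)) ^ j = ennreal (c ^ j)" for j
      using t by (simp add: c_def inverse_ennreal ennreal_power)
    have "(\<integral>\<^sup>+s. ennreal (c ^ m) * indicator (Hset m) s \<partial>J n) \<le> (\<integral>\<^sup>+s. Phi s \<partial>J n)"
    proof (rule nn_integral_mono)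
      fix s assume "s \<in> space (J n)"
      show "ennreal (c ^ m) * indicator (Hset m) s \<le> Phi s"
      proof (cases "s \<in> Hset m")
        case True
        then have "c ^ m \<le> c ^ sj s" using c1 by (intro power_increasing) (auto simp: Hset_def)
        then show ?thesis using True by (simp add: Phi_def Hset_def inv ennreal_leI)
      qed simp
    qed
    also have "\<dots> \<le> 1" by (rule Phi_chain)
    finally have "ennreal (c ^ m) * emeasure (J n) (Hset m) \<le> 1"
      by (simp add: nn_integral_cmult_indicator)
    then have "ennreal (c ^ m * measure (J n) (Hset m)) \<le> ennreal 1"
      using c1 by (simp add: Jn.emeasure_eq_measure ennreal_mult)
    then have "c ^ m * measure (J n) (Hset m) \<le> 1" by (simp add: ennreal_le_iff2)
    then have "measure (J n) (Hset m) \<le> 1 / c ^ m" using c1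
      by (simp add: field_simps)
    also have "1 / c ^ m = (1 - \<epsilon>) ^ m" unfolding c_def by (simp add: power_inverse divide_inverse)
    finally show ?thesis .
  qed
qed


lemma G_bound:
  assumes m: "0 < m" "m < k" and Ef: "(\<integral>\<^sup>+x. ennreal (f x) \<partial>\<nu>) \<noteq> \<infinity>"
  shows "measure (J k) (Gset m) \<le>
    ((alpha * Lam) ^ m * (1 + enn2real (\<integral>\<^sup>+x. ennreal (f x) \<partial>\<nu>) + b / (1 - lam)) - alpha ^ m) / (alpha ^ k - alpha ^ m)"
proof -
  interpret Jk: prob_space "J k" by (rule J_prob)
  define A where "A = 1 + enn2real (\<integral>\<^sup>+x. ennreal (f x) \<partial>\<nu>) + b / (1 - lam)"
  define c1 where "c1 = alpha ^ k / (alpha * Lam) ^ m"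
  define c0 where "c0 = 1 / Lam ^ m"
  define g where "g = measure (J k) (Gset m)"
  have "1 * 1 \<le> alpha * Lam" using alpha_gt1 Lam_ge1 by (intro mult_mono) auto
  then have ap: "0 < alpha" "0 < Lam" "1 \<le> alpha * Lam" using alpha_gt1 Lam_ge1 by auto
  have c0p: "0 \<le> c0" unfolding c0_def using ap by simp
  have c1p: "0 \<le> c1" unfolding c1_def using ap by simp
  have pw: "ennreal c1 * indicator (Gset m) s + ennreal c0 * indicator (space S - Gset m) s \<le> W m k s"
    if s: "s \<in> space S" for s
  proof (cases "s \<in> Gset m")
    case True
    then have g: "\<not> scp s" "sal s" "sj s < m" by (auto simp: Gset_def)
    have f0: "0 \<le> f (sx s)" "0 \<le> f (sy s)" using s_facts[OF s] f_space by auto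
    have "(alpha * Lam) ^ sj s \<le> (alpha * Lam) ^ m" using ap g by (intro power_increasing) auto
    then have "c1 \<le> alpha ^ k / (alpha * Lam) ^ sj s" unfolding c1_def using ap
      by (intro divide_left_mono) auto
    also have "\<dots> \<le> alpha ^ k / (alpha * Lam) ^ sj s * (1 + f (sx s) + f (sy s))"
    proof -
      have "0 \<le> alpha ^ k / (alpha * Lam) ^ sj s" using ap by simp
      then have "alpha ^ k / (alpha * Lam) ^ sj s * 1 \<le> alpha ^ k / (alpha * Lam) ^ sj s * (1 + f (sx s) + f (sy s))"
        using f0 by (intro mult_left_mono) auto
      then show ?thesis by simp
    qed
    finally have le: "c1 \<le> alpha ^ k / (alpha * Lam) ^ sj s * (1 + f (sx s) + f (sy s))" .
    have "W m k s = ennreal (alpha ^ k / (alpha * Lam) ^ sj s * (1 + f (sx s) + f (sy s)))"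
      unfolding W_def using g by simp
    then show ?thesis using True s ennreal_leI[OF le] by simp
  next
    case False
    have "W m k s = ennreal c0" unfolding W_def c0_def using False s by (auto simp: Gset_def)
    then show ?thesis using False s by simp
  qed
  have "ennreal c1 * emeasure (J k) (Gset m) + ennreal c0 * emeasure (J k) (space S - Gset m)
      = (\<integral>\<^sup>+s. ennreal c1 * indicator (Gset m) s + ennreal c0 * indicator (space S - Gset m) s \<partial>J k)"
  proof -
    have "Gset m \<in> sets (J k)" "space S - Gset m \<in> sets (J k)" by simp_all
    moreover have "(\<lambda>s. ennreal c1 * indicator (Gset m) s) \<in> borel_measurable (J k)"
      "(\<lambda>s. ennreal c0 * indicator (space S - Gset m) s) \<in> borel_measurable (J k)"
      by (subst measurable_cong_sets[OF J_sets refl], measurable)+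
    ultimately show ?thesis
      by (subst nn_integral_add) (auto simp: nn_integral_cmult_indicator)
  qed
  also have "\<dots> \<le> (\<integral>\<^sup>+s. W m k s \<partial>J k)"
    by (rule nn_integral_mono) (simp add: J_spaceS pw)
  also have "\<dots> \<le> (\<integral>\<^sup>+s. W m 0 s \<partial>J 0)" by (rule W_chain)
  also have "\<dots> \<le> 1 + (\<integral>\<^sup>+x. ennreal (f x) \<partial>\<nu>) + ennreal (b / (1 - lam))" by (rule W_init[OF m(1)])
  also have "\<dots> = ennreal A"
  proof -
    have e: "(\<integral>\<^sup>+x. ennreal (f x) \<partial>\<nu>) = ennreal (enn2real (\<integral>\<^sup>+x. ennreal (f x) \<partial>\<nu>))"
      using Ef by (simp add: ennreal_enn2real_if)
    have "0 \<le> b / (1 - lam)" using b lam by simp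
    then show ?thesis unfolding A_def by (subst e) (simp only: ennreal_3[OF enn2real_nonneg])
  qed
  finally have le1: "ennreal c1 * emeasure (J k) (Gset m) + ennreal c0 * emeasure (J k) (space S - Gset m) \<le> ennreal A" .
  have mc: "measure (J k) (space S - Gset m) = 1 - g"
    unfolding g_def using Jk.prob_compl[of "Gset m"] by (simp add: J_spaceS)
  have "ennreal c1 * emeasure (J k) (Gset m) + ennreal c0 * emeasure (J k) (space S - Gset m)
      = ennreal (c1 * g + c0 * (1 - g))"
  proof -
    have g1: "0 \<le> g" "g \<le> 1" unfolding g_def by simp_all
    have "ennreal c1 * emeasure (J k) (Gset m) + ennreal c0 * emeasure (J k) (space S - Gset m)
        = ennreal c1 * ennreal g + ennreal c0 * ennreal (1 - g)"
      by (simp add: Jk.emeasure_eq_measure mc g_def)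
    also have "\<dots> = ennreal (c1 * g) + ennreal (c0 * (1 - g))"
      using c0p c1p g1 by (simp add: ennreal_mult)
    also have "\<dots> = ennreal (c1 * g + c0 * (1 - g))"
      using c0p c1p g1 by (intro ennreal_plus[symmetric]) auto
    finally show ?thesis .
  qed
  with le1 have "ennreal (c1 * g + c0 * (1 - g)) \<le> ennreal A" by simp
  moreover have "0 \<le> A" unfolding A_def using b lam by simp
  ultimately have main: "c1 * g + c0 * (1 - g) \<le> A" by (simp add: ennreal_le_iff)
  have "alpha ^ m < alpha ^ k" using alpha_gt1 m by (intro power_strict_increasing) auto
  then have cc: "c0 < c1" unfolding c0_def c1_def using ap
    by (simp add: power_mult_distrib field_simps)
  have "g \<le> (A - c0) / (c1 - c0)" using main cc by (simp add: field_simps)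
  also have "(A - c0) / (c1 - c0) = ((alpha * Lam) ^ m * A - alpha ^ m) / (alpha ^ k - alpha ^ m)"
    unfolding c0_def c1_def using ap \<open>alpha ^ m < alpha ^ k\<close>
    by (simp add: power_mult_distrib field_simps)
  finally show ?thesis unfolding g_def A_def .
qed

lemma D_bound: "measure (J (Suc n)) Dset \<le> (\<Sum>i\<le>n. measure (kstep P i \<nu>) (space M - R0) + measure \<pi> (space M - R0))"
proof -
  interpret Jn: prob_space "J (Suc n)" by (rule J_prob)
  have R0c: "space M - R0 \<in> sets M" by simp
  have Oi: "(\<integral>\<^sup>+s. Oo s \<partial>J i) \<le> ennreal (measure (kstep P i \<nu>) (space M - R0) + measure \<pi> (space M - R0))" for i
  proof -
    interpret Ji: prob_space "J i" by (rule J_prob)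
    interpret ki: prob_space "kstep P i \<nu>" by (rule kstep_prob)
    interpret pp: prob_space \<pi> by (rule pi_prob)
    let ?A = "sx -` (space M - R0) \<inter> space S" and ?B = "Yp -` (space M - R0) \<inter> space S"
    have Am: "?A \<in> sets S" and Bm: "?B \<in> sets S" by measurable
    have "(\<integral>\<^sup>+s. Oo s \<partial>J i) \<le> (\<integral>\<^sup>+s. indicator ?A s + indicator ?B s \<partial>J i)"
      by (rule nn_integral_mono) (auto simp: Oo_def J_spaceS s_facts split: split_indicator)
    also have "\<dots> = emeasure (J i) ?A + emeasure (J i) ?B"
    proof -
      have "?A \<in> sets (J i)" "?B \<in> sets (J i)" using Am Bm by simp_all
      then show ?thesis by (subst nn_integral_add) (auto intro!: borel_measurable_indicator)
    qed
    also have "\<dots> = emeasure (kstep P i \<nu>) (space M - R0) + emeasure \<pi> (space M - R0)"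
      using emeas_X[OF R0c, of i] emeas_Y[OF R0c, of i] by simp
    also have "\<dots> = ennreal (measure (kstep P i \<nu>) (space M - R0) + measure \<pi> (space M - R0))"
      by (simp add: ki.emeasure_eq_measure pp.emeasure_eq_measure ennreal_plus)
    finally show ?thesis .
  qed
  have "(\<integral>\<^sup>+s. Dd s \<partial>J (Suc n)) = (\<integral>\<^sup>+s. indicator Dset s \<partial>J (Suc n))"
    by (rule nn_integral_cong) (auto simp: Dd_def Dset_def J_spaceS split: split_indicator)
  then have "emeasure (J (Suc n)) Dset = (\<integral>\<^sup>+s. Dd s \<partial>J (Suc n))"
    by simp
  also have "\<dots> \<le> (\<Sum>i\<le>n. (\<integral>\<^sup>+s. Oo s \<partial>J i))" by (rule Dd_chain)
  also have "\<dots> \<le> (\<Sum>i\<le>n. ennreal (measure (kstep P i \<nu>) (space M - R0) + measure \<pi> (space M - R0)))"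
    by (rule sum_mono) (rule Oi)
  also have "\<dots> = ennreal (\<Sum>i\<le>n. measure (kstep P i \<nu>) (space M - R0) + measure \<pi> (space M - R0))"
    by (rule sum_ennreal) simp
  finally show ?thesis by (simp add: Jn.emeasure_eq_measure ennreal_le_iff sum_nonneg)
qed


lemma nu_R0c: "measure \<nu> (space M - R0) = 0"
proof -
  interpret p: prob_space \<nu> by (rule nu_prob)
  have "measure \<nu> (space \<nu> - R0) = 1 - measure \<nu> R0"
    by (rule p.prob_compl) (simp add: nu_sets)
  then show ?thesis using nu_R0 by (simp add: sets_eq_imp_space_eq[OF nu_sets])
qed

theorem core_bound:
  assumes m: "0 < m" "m < k" and Ef: "(\<integral>\<^sup>+x. ennreal (f x) \<partial>\<nu>) \<noteq> \<infinity>"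
  shows "tv_dist M (kstep P k \<nu>) \<pi> \<le> (1 - \<epsilon>) ^ m
     + ((alpha * Lam) ^ m * (1 + enn2real (\<integral>\<^sup>+x. ennreal (f x) \<partial>\<nu>) + b / (1 - lam)) - alpha ^ m) / (alpha ^ k - alpha ^ m)
     + real k * measure \<pi> (space M - R0)
     + (\<Sum>i=1..k. measure (kstep P i \<nu>) (space M - R0))"
proof -
  obtain n where k: "k = Suc n" using m by (cases k) auto
  define g where "g i = measure (kstep P i \<nu>) (space M - R0)" for i
  have g0: "g 0 = 0" unfolding g_def using nu_R0c by simp
  have gnn: "0 \<le> g i" for i unfolding g_def by simp
  have "(\<Sum>i\<le>n. g i + measure \<pi> (space M - R0)) = (\<Sum>i\<le>n. g i) + real k * measure \<pi> (space M - R0)"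
    by (simp add: sum.distrib k)
  also have "(\<Sum>i\<le>n. g i) \<le> (\<Sum>i\<le>Suc n. g i)" using gnn by simp
  also have "(\<Sum>i\<le>Suc n. g i) = g 0 + (\<Sum>i=1..Suc n. g i)"
  proof -
    have "{..Suc n} = insert 0 {1..Suc n}" by auto
    then show ?thesis by simp
  qed
  finally have Dsum: "(\<Sum>i\<le>n. g i + measure \<pi> (space M - R0)) \<le> real k * measure \<pi> (space M - R0) + (\<Sum>i=1..k. g i)"
    using g0 k by simp
  have "tv_dist M (kstep P k \<nu>) \<pi> \<le> measure (J k) Uset" by (rule tv_le)
  also have "\<dots> \<le> measure (J k) (Gset m) + measure (J k) (Hset m) + measure (J k) Dset" by (rule U_split)
  also have "\<dots> \<le> ((alpha * Lam) ^ m * (1 + enn2real (\<integral>\<^sup>+x. ennreal (f x) \<partial>\<nu>) + b / (1 - lam)) - alpha ^ m) / (alpha ^ k - alpha ^ m)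
       + (1 - \<epsilon>) ^ m + (real k * measure \<pi> (space M - R0) + (\<Sum>i=1..k. g i))"
  proof (intro add_mono)
    show "measure (J k) (Gset m) \<le> ((alpha * Lam) ^ m * (1 + enn2real (\<integral>\<^sup>+x. ennreal (f x) \<partial>\<nu>) + b / (1 - lam)) - alpha ^ m) / (alpha ^ k - alpha ^ m)"
      by (rule G_bound[OF m Ef])
    show "measure (J k) (Hset m) \<le> (1 - \<epsilon>) ^ m" by (rule H_bound[OF m(1)])
    show "measure (J k) Dset \<le> real k * measure \<pi> (space M - R0) + (\<Sum>i=1..k. g i)"
      using D_bound[of n] Dsum unfolding k g_def by simp
  qed
  finally show ?thesis unfolding g_def by simp
qed

end



lemma Inf_bound:
  fixes f :: "'a \<Rightarrow> real"
  assumes ne: "R0 \<noteq> {}" and nn: "\<forall>x\<in>R0. 0 \<le> f x" and lam: "0 < lam" "lam < 1"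
    and H: "\<forall>x\<in>R0. Inf (f ` R0) \<le> lam * f x + b"
  shows "Inf (f ` R0) \<le> b / (1 - lam)"
proof -
  let ?c = "Inf (f ` R0)"
  have bdd: "bdd_below (f ` R0)" using nn by (auto intro!: bdd_belowI[of _ 0])
  have "(?c - b) / lam \<le> ?c"
  proof (rule cInf_greatest)
    show "f ` R0 \<noteq> {}" using ne by simp
    fix y assume "y \<in> f ` R0"
    then obtain x where x: "x \<in> R0" "y = f x" by auto
    then show "(?c - b) / lam \<le> y" using H lam by (auto simp: field_simps)
  qed
  then have "?c - b \<le> lam * ?c" using lam by (simp add: field_simps)
  then show ?thesis using lam by (simp add: field_simps)
qed

lemma exists_small:
  fixes f :: "'a \<Rightarrow> real"
  assumes ne: "R0 \<noteq> {}" and nn: "\<forall>x\<in>R0. 0 \<le> f x" and lam: "0 < lam" "lam < 1"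
    and H: "\<forall>x\<in>R0. Inf (f ` R0) \<le> lam * f x + b" and b: "0 \<le> b" and d: "d > 2 * b / (1 - lam)"
  shows "\<exists>x\<in>R0. f x \<le> d"
proof -
  have bdd: "bdd_below (f ` R0)" using nn by (auto intro!: bdd_belowI[of _ 0])
  have "b / (1 - lam) \<le> 2 * b / (1 - lam)" using b lam by (simp add: divide_right_mono)
  then have "Inf (f ` R0) < d" using Inf_bound[OF ne nn lam H] d by linarith
  then obtain y where "y \<in> f ` R0" "y < d" using cInf_lessD[of "f ` R0" d] ne by auto
  then show ?thesis by force
qed

lemma eps_le1:
  assumes P_kernel: "P \<in> M \<rightarrow>\<^sub>M prob_algebra M" and Q_prob: "prob_space Q" and Q_sets: "sets Q = sets M"
    and minor: "\<forall>x\<in>{x\<in>space M. f x \<le> d}. \<forall>A\<in>sets M. measure (P x) A \<ge> \<epsilon> * measure Q A"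
    and x: "x \<in> space M" "f x \<le> d"
  shows "\<epsilon> \<le> 1"
proof -
  have Px: "P x \<in> space (prob_algebra M)" by (rule measurable_space[OF P_kernel x(1)])
  then have s: "sets (P x) = sets M" "prob_space (P x)" by (simp_all add: space_prob_algebra)
  then have "measure (P x) (space M) = 1"
    using prob_space.prob_space[OF s(2)] sets_eq_imp_space_eq[OF s(1)] by simp
  moreover have "measure Q (space M) = 1"
    using prob_space.prob_space[OF Q_prob] by (simp add: sets_eq_imp_space_eq[OF Q_sets])
  ultimately show ?thesis using minor x by force
qed


lemma C1_inf:
  assumes P_kernel: "P \<in> M \<rightarrow>\<^sub>M prob_algebra M" and f_nonneg: "\<forall>x\<in>space M. 0 \<le> f x"
    and drift: "\<forall>x\<in>R0. (\<integral>\<^sup>+y. ennreal (f y) \<partial>(P x)) \<le> ennreal (lam * f x + b)"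
    and R0: "R0 = {x\<in>space M. f x \<le> d0}" and lam: "0 < lam" and b: "0 \<le> b"
  shows "\<forall>x\<in>R0. Inf (f ` R0) \<le> lam * f x + b"
proof
  fix x assume x: "x \<in> R0"
  let ?c = "Inf (f ` R0)"
  have xs: "x \<in> space M" using x R0 by auto
  have bdd: "bdd_below (f ` R0)" using f_nonneg R0 by (auto intro!: bdd_belowI[of _ 0])
  have c0: "0 \<le> ?c" using x f_nonneg R0 by (intro cInf_greatest) auto
  have cle: "?c \<le> f y" if y: "y \<in> space M" for y
  proof (cases "y \<in> R0")
    case True then show ?thesis using bdd by (simp add: cInf_lower)
  next
    case False
    then have "f x < f y" using x y R0 by auto
    moreover have "?c \<le> f x" using bdd x by (simp add: cInf_lower)
    ultimately show ?thesis by simp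
  qed
  have Px: "P x \<in> space (prob_algebra M)" by (rule measurable_space[OF P_kernel xs])
  then have s: "sets (P x) = sets M" "prob_space (P x)" by (simp_all add: space_prob_algebra)
  have sp: "space (P x) = space M" by (rule sets_eq_imp_space_eq[OF s(1)])
  have "ennreal ?c = (\<integral>\<^sup>+y. ennreal ?c \<partial>P x)"
    using prob_space.emeasure_space_1[OF s(2)] by simp
  also have "\<dots> \<le> (\<integral>\<^sup>+y. ennreal (f y) \<partial>P x)"
    by (rule nn_integral_mono) (simp add: sp cle ennreal_leI)
  also have "\<dots> \<le> ennreal (lam * f x + b)" using drift x by auto
  finally show "?c \<le> lam * f x + b"
    using lam b f_nonneg xs by (subst (asm) ennreal_le_iff) auto
qed

lemma C1_Ipi:
  assumes P_kernel: "P \<in> M \<rightarrow>\<^sub>M prob_algebra M" and f_nonneg: "\<forall>x\<in>space M. 0 \<le> f x"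
    and f_meas: "f \<in> borel_measurable M"
    and drift: "\<forall>x\<in>R0. (\<integral>\<^sup>+y. ennreal (f y) \<partial>(P x)) \<le> ennreal (lam * f x + b)"
    and R0: "R0 = {x\<in>space M. f x \<le> d0}" and d0: "0 < d0" and lam: "0 < lam" "lam < 1" and b: "0 \<le> b"
    and pi_prob: "prob_space \<pi>" and pi_sets: "sets \<pi> = sets M" and pi_stat: "\<pi> \<bind> P = \<pi>"
  shows "(\<integral>\<^sup>+x\<in>R0. ennreal (f x) \<partial>\<pi>) \<le> ennreal (b / (1 - lam))"
proof -
  interpret pp: prob_space \<pi> by (rule pi_prob)
  define g where "g x = min (f x) d0" for x
  have R0m: "R0 \<in> sets M" unfolding R0 using f_meas by measurable
  have gm: "g \<in> borel_measurable M" unfolding g_def using f_meas by measurable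
  have gpi: "g \<in> borel_measurable \<pi>" using gm by (simp add: measurable_cong_sets[OF pi_sets refl])
  have R0pi: "R0 \<in> sets \<pi>" "space M - R0 \<in> sets \<pi>" using R0m by (simp_all add: pi_sets)
  have sppi: "space \<pi> = space M" by (rule sets_eq_imp_space_eq[OF pi_sets])
  have g0: "0 \<le> g x" if "x \<in> space M" for x using f_nonneg that d0 by (simp add: g_def)
  have gd: "g x \<le> d0" for x by (simp add: g_def)
  define a where "a = (\<integral>\<^sup>+x. ennreal (g x) * indicator R0 x \<partial>\<pi>)"
  define c where "c = (\<integral>\<^sup>+x. ennreal (g x) * indicator (space M - R0) x \<partial>\<pi>)"
  have fin: "(\<integral>\<^sup>+x. ennreal (g x) * indicator A x \<partial>\<pi>) < \<infinity>" for A
  proof -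
    have "(\<integral>\<^sup>+x. ennreal (g x) * indicator A x \<partial>\<pi>) \<le> (\<integral>\<^sup>+x. ennreal d0 \<partial>\<pi>)"
      by (rule nn_integral_mono) (auto simp: gd ennreal_leI split: split_indicator)
    also have "\<dots> = ennreal d0" using pp.emeasure_space_1 by simp
    finally show ?thesis by (simp add: le_less_trans)
  qed
  have split: "(\<integral>\<^sup>+x. ennreal (g x) \<partial>\<pi>) = a + c"
  proof -
    have "(\<integral>\<^sup>+x. ennreal (g x) \<partial>\<pi>) = (\<integral>\<^sup>+x. ennreal (g x) * indicator R0 x + ennreal (g x) * indicator (space M - R0) x \<partial>\<pi>)"
      by (rule nn_integral_cong) (auto simp: sppi split: split_indicator)
    also have "\<dots> = a + c" unfolding a_def c_def
      using gpi R0pi by (intro nn_integral_add) auto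
    finally show ?thesis .
  qed
  have PK: "P \<in> \<pi> \<rightarrow>\<^sub>M subprob_algebra M"
    using measurable_prob_algebraD[OF P_kernel] by (simp add: measurable_cong_sets[OF pi_sets refl])
  have "(\<integral>\<^sup>+x. ennreal (g x) \<partial>\<pi>) = (\<integral>\<^sup>+x. ennreal (g x) \<partial>(\<pi> \<bind> P))" by (simp add: pi_stat)
  also have "\<dots> = (\<integral>\<^sup>+x. (\<integral>\<^sup>+y. ennreal (g y) \<partial>P x) \<partial>\<pi>)"
    by (rule nn_integral_bind[OF _ PK]) (use gm in simp)
  also have "\<dots> \<le> (\<integral>\<^sup>+x. ennreal lam * (ennreal (g x) * indicator R0 x) + ennreal b * indicator R0 x
                        + ennreal (g x) * indicator (space M - R0) x \<partial>\<pi>)"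
  proof (rule nn_integral_mono)
    fix x assume "x \<in> space \<pi>"
    then have xs: "x \<in> space M" by (simp add: sppi)
    have Px: "P x \<in> space (prob_algebra M)" by (rule measurable_space[OF P_kernel xs])
    then have s: "sets (P x) = sets M" "prob_space (P x)" by (simp_all add: space_prob_algebra)
    have sp: "space (P x) = space M" by (rule sets_eq_imp_space_eq[OF s(1)])
    show "(\<integral>\<^sup>+y. ennreal (g y) \<partial>P x) \<le> ennreal lam * (ennreal (g x) * indicator R0 x) + ennreal b * indicator R0 x
                        + ennreal (g x) * indicator (space M - R0) x"
    proof (cases "x \<in> R0")
      case True
      then have "f x \<le> d0" using R0 by auto
      then have gx: "g x = f x" by (simp add: g_def)
      have "(\<integral>\<^sup>+y. ennreal (g y) \<partial>P x) \<le> (\<integral>\<^sup>+y. ennreal (f y) \<partial>P x)"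
        by (rule nn_integral_mono) (simp add: g_def ennreal_leI)
      also have "\<dots> \<le> ennreal (lam * f x + b)" using drift True by auto
      also have "\<dots> = ennreal lam * ennreal (g x) + ennreal b"
        using lam b f_nonneg xs gx by (simp add: ennreal_mult ennreal_plus)
      finally show ?thesis using True xs by simp
    next
      case False
      then have "d0 < f x" using R0 xs by auto
      then have gx: "g x = d0" by (simp add: g_def)
      have "(\<integral>\<^sup>+y. ennreal (g y) \<partial>P x) \<le> (\<integral>\<^sup>+y. ennreal d0 \<partial>P x)"
        by (rule nn_integral_mono) (simp add: gd ennreal_leI)
      also have "\<dots> = ennreal d0" using prob_space.emeasure_space_1[OF s(2)] by simp
      finally show ?thesis using False xs gx by simp
    qed
  qed
  also have "\<dots> = ennreal lam * a + ennreal b * emeasure \<pi> R0 + c"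
    unfolding a_def c_def using gpi R0pi
    by (simp add: nn_integral_add nn_integral_cmult nn_integral_cmult_indicator)
  finally have ineq: "a + c \<le> ennreal lam * a + ennreal b * emeasure \<pi> R0 + c" unfolding split .
  have cfin: "c \<noteq> \<infinity>" using fin unfolding c_def by (simp add: less_top)
  have afin: "a \<noteq> \<infinity>" using fin unfolding a_def by (simp add: less_top)
  have "a \<le> ennreal lam * a + ennreal b * emeasure \<pi> R0"
    using ineq cfin by (simp add: add.commute ennreal_add_left_cancel_le)
  moreover obtain r where r: "a = ennreal r" "0 \<le> r" using afin by (cases a) auto
  moreover have "emeasure \<pi> R0 = ennreal (measure \<pi> R0)" by (simp add: pp.emeasure_eq_measure)
  ultimately have "ennreal r \<le> ennreal (lam * r + b * measure \<pi> R0)"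
    using lam b by (simp add: ennreal_mult ennreal_plus)
  then have "r \<le> lam * r + b * measure \<pi> R0" using lam b r by (subst (asm) ennreal_le_iff) auto
  moreover have "b * measure \<pi> R0 \<le> b" using b by (simp add: mult_left_le)
  ultimately have "r * (1 - lam) \<le> b" by (simp add: algebra_simps)
  then have rb: "r \<le> b / (1 - lam)" using lam by (simp add: field_simps)
  have "(\<integral>\<^sup>+x\<in>R0. ennreal (f x) \<partial>\<pi>) = a"
    unfolding a_def by (rule nn_integral_cong) (auto simp: g_def R0 split: split_indicator)
  then show ?thesis using rb r by (simp add: ennreal_leI)
qed


lemma C2_facts:
  assumes P_kernel: "P \<in> M \<rightarrow>\<^sub>M prob_algebra M"
    and pi_prob: "prob_space \<pi>" and pi_sets: "sets \<pi> = sets M"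
    and R0_meas: "R0 \<in> sets M" and R0ne: "R0 \<noteq> {}"
    and f_meas: "f \<in> borel_measurable M" and f_nonneg: "\<forall>x\<in>space M. 0 \<le> f x"
    and lam: "0 < lam" "lam < 1" and b: "0 \<le> b"
    and drift: "\<forall>x\<in>R0. (\<integral>\<^sup>+y. ennreal (f y) \<partial>(P x)) \<le> ennreal (lam * f x + b)"
    and Ps: "length Ps \<ge> 1"
                  "\<forall>K\<in>set Ps. K \<in> M \<rightarrow>\<^sub>M prob_algebra M \<and> reversible_kernel M \<pi> K"
                  "\<forall>x\<in>space M. P x = kcomp M Ps x"
                  "\<forall>x\<in>space M. {x} \<in> sets M"
                  "\<forall>x\<in>R0. (\<integral>\<^sup>+y. ennreal (f y) \<partial>(kcomp M (map (trunc_kernel M R0) Ps) x))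
                              \<le> (\<integral>\<^sup>+y. ennreal (f y) \<partial>(P x))"
  shows "(\<forall>x\<in>R0. Inf (f ` R0) \<le> lam * f x + b) \<and> (\<integral>\<^sup>+x\<in>R0. ennreal (f x) \<partial>\<pi>) \<le> ennreal (b / (1 - lam))"
proof -
  let ?Tc = "kcomp M (map (trunc_kernel M R0) Ps)"
  let ?mu = "density \<pi> (indicator R0)"
  have smu: "sets ?mu = sets M" using pi_sets by simp
  have G: "\<forall>G\<in>set (map (trunc_kernel M R0) Ps). G \<in> M \<rightarrow>\<^sub>M prob_algebra M \<and> (\<forall>x\<in>R0. emeasure (G x) (space M - R0) = 0) \<and> ?mu \<bind> G = ?mu"
  proof
    fix G assume "G \<in> set (map (trunc_kernel M R0) Ps)"
    then obtain K where K: "K \<in> set Ps" "G = trunc_kernel M R0 K" by auto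
    have Kk: "K \<in> M \<rightarrow>\<^sub>M prob_algebra M" "reversible_kernel M \<pi> K" using Ps(2) K(1) by auto
    interpret t: trc M \<pi> R0 K by (rule trc.intro[OF Kk(1) R0_meas Ps(4)])
    show "G \<in> M \<rightarrow>\<^sub>M prob_algebra M \<and> (\<forall>x\<in>R0. emeasure (G x) (space M - R0) = 0) \<and> ?mu \<bind> G = ?mu"
      unfolding K(2) using t.T_kernel t.T_support t.T_stat[OF pi_sets Kk(2)] by auto
  qed
  have kp: "?Tc \<in> M \<rightarrow>\<^sub>M prob_algebra M \<and> (\<forall>x\<in>R0. emeasure (?Tc x) (space M - R0) = 0) \<and> ?mu \<bind> ?Tc = ?mu"
    by (rule kcomp_props[OF R0_meas smu G])
  have dr: "\<forall>x\<in>R0. (\<integral>\<^sup>+y. ennreal (f y) \<partial>?Tc x) \<le> ennreal (lam * f x + b)"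
    using Ps(5) drift order_trans by blast
  have kp1: "?Tc \<in> M \<rightarrow>\<^sub>M prob_algebra M" and kp2: "\<forall>x\<in>R0. emeasure (?Tc x) (space M - R0) = 0"
    and kp3: "?mu \<bind> ?Tc = ?mu" using kp by blast+
  interpret cc: c2 M \<pi> R0 f lam b ?Tc
    by (rule c2.intro[OF kp1 kp2 kp3 dr R0_meas f_meas f_nonneg lam b pi_prob pi_sets])
  show ?thesis using cc.inf_prop cc.Ipi by blast
qed

theorem mainTheorem1:
  fixes M :: "'a measure" and P :: "'a \<Rightarrow> 'a measure"
    and \<pi> \<nu> Q :: "'a measure" and R0 :: "'a set" and f :: "'a \<Rightarrow> real"
    and lam b d \<epsilon> r :: real and k m :: nat
  assumes P_kernel: "P \<in> M \<rightarrow>\<^sub>M prob_algebra M"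
    and irred: "irreducible_kernel M P"
    and pi_prob: "prob_space \<pi>" and pi_sets: "sets \<pi> = sets M"
    and pi_stat: "\<pi> \<bind> P = \<pi>"
    and R0_meas: "R0 \<in> sets M"
    and f_meas: "f \<in> borel_measurable M" and f_nonneg: "\<forall>x\<in>space M. 0 \<le> f x"
    and lam: "0 < lam" "lam < 1" and b: "0 \<le> b"
    and drift: "\<forall>x\<in>R0. (\<integral>\<^sup>+y. ennreal (f y) \<partial>(P x)) \<le> ennreal (lam * f x + b)"
    and C: "(\<exists>d0>0. R0 = {x\<in>space M. f x \<le> d0})
            \<or> (\<exists>Ps. length Ps \<ge> 1
                  \<and> (\<forall>K\<in>set Ps. K \<in> M \<rightarrow>\<^sub>M prob_algebra M \<and> reversible_kernel M \<pi> K)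
                  \<and> (\<forall>x\<in>space M. P x = kcomp M Ps x)
                  \<and> (\<forall>x\<in>space M. {x} \<in> sets M)
                  \<and> (\<forall>x\<in>R0. (\<integral>\<^sup>+y. ennreal (f y) \<partial>(kcomp M (map (trunc_kernel M R0) Ps) x))
                              \<le> (\<integral>\<^sup>+y. ennreal (f y) \<partial>(P x))))"
    and d: "d > 2 * b / (1 - lam)"
    and eps: "\<epsilon> > 0"
    and Q_prob: "prob_space Q" and Q_sets: "sets Q = sets M"
    and minor: "\<forall>x\<in>{x\<in>space M. f x \<le> d}. \<forall>A\<in>sets M. measure (P x) A \<ge> \<epsilon> * measure Q A"
    and nu_prob: "prob_space \<nu>" and nu_sets: "sets \<nu> = sets M"
    and nu_R0: "measure \<nu> R0 = 1"
    and r: "0 < r" "r < 1" and k: "k > 0" and rk: "real m = r * real k"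
  shows "let \<alpha> = (1 + d) / (1 + 2 * b + lam * d);
             Lam = 1 + 2 * (lam * d + b);
             Ef = (\<integral>\<^sup>+x. ennreal (f x) \<partial>\<nu>)
         in Ef = \<infinity> \<or>
            tv_dist M (kstep P k \<nu>) \<pi>
              \<le> (1 - \<epsilon> * measure Q R0) ^ m
                 + ((\<alpha> * Lam) ^ m * (1 + enn2real Ef + b / (1 - lam)) - \<alpha> ^ m) / (\<alpha> ^ k - \<alpha> ^ m)
                 + real k * measure \<pi> (space M - R0)
                 + (\<Sum>i=1..k. measure (kstep P i \<nu>) (space M - R0))"
proof -
  have R0ne: "R0 \<noteq> {}" using nu_R0 by auto
  have R0s: "R0 \<subseteq> space M" using R0_meas sets.sets_into_space by auto
  have key: "(\<forall>x\<in>R0. Inf (f ` R0) \<le> lam * f x + b) \<and> (\<integral>\<^sup>+x\<in>R0. ennreal (f x) \<partial>\<pi>) \<le> ennreal (b / (1 - lam))"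
    using C
  proof
    assume "\<exists>d0>0. R0 = {x\<in>space M. f x \<le> d0}"
    then obtain d0 where d0: "0 < d0" "R0 = {x\<in>space M. f x \<le> d0}" by blast
    show ?thesis
      using C1_inf[OF P_kernel f_nonneg drift d0(2) lam(1) b]
        C1_Ipi[OF P_kernel f_nonneg f_meas drift d0(2) d0(1) lam b pi_prob pi_sets pi_stat] by blast
  next
    assume "\<exists>Ps. length Ps \<ge> 1
                  \<and> (\<forall>K\<in>set Ps. K \<in> M \<rightarrow>\<^sub>M prob_algebra M \<and> reversible_kernel M \<pi> K)
                  \<and> (\<forall>x\<in>space M. P x = kcomp M Ps x)
                  \<and> (\<forall>x\<in>space M. {x} \<in> sets M)
                  \<and> (\<forall>x\<in>R0. (\<integral>\<^sup>+y. ennreal (f y) \<partial>(kcomp M (map (trunc_kernel M R0) Ps) x))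
                              \<le> (\<integral>\<^sup>+y. ennreal (f y) \<partial>(P x)))"
    then obtain Ps where "length Ps \<ge> 1"
                  "\<forall>K\<in>set Ps. K \<in> M \<rightarrow>\<^sub>M prob_algebra M \<and> reversible_kernel M \<pi> K"
                  "\<forall>x\<in>space M. P x = kcomp M Ps x"
                  "\<forall>x\<in>space M. {x} \<in> sets M"
                  "\<forall>x\<in>R0. (\<integral>\<^sup>+y. ennreal (f y) \<partial>(kcomp M (map (trunc_kernel M R0) Ps) x))
                              \<le> (\<integral>\<^sup>+y. ennreal (f y) \<partial>(P x))" by blast
    then show ?thesis
      by (intro C2_facts[OF P_kernel pi_prob pi_sets R0_meas R0ne f_meas f_nonneg lam b drift]) auto
  qed
  have nnR0: "\<forall>x\<in>R0. 0 \<le> f x" using f_nonneg R0s by auto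
  obtain x0 where x0: "x0 \<in> R0" "f x0 \<le> d"
    using exists_small[OF R0ne nnR0 lam conjunct1[OF key] b d] by blast
  have e1: "\<epsilon> \<le> 1" using eps_le1[OF P_kernel Q_prob Q_sets minor] x0 R0s by auto
  interpret c: cpl M P \<pi> \<nu> Q R0 f lam b d \<epsilon>
    by (rule cpl.intro[OF P_kernel pi_prob pi_sets pi_stat R0_meas f_meas f_nonneg lam b drift d eps e1
        Q_prob Q_sets minor nu_prob nu_sets nu_R0 conjunct2[OF key]])
  have "0 < r * real k" using r k by simp
  then have m0: "0 < m" using rk by linarith
  have mk: "m < k"
  proof -
    have "r * real k < real k" using r k by simp
    then show ?thesis using rk by linarith
  qed
  show ?thesis
  proof (cases "(\<integral>\<^sup>+x. ennreal (f x) \<partial>\<nu>) = \<infinity>")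
    case True then show ?thesis by (simp add: Let_def)
  next
    case False
    have QR0: "measure Q R0 \<le> 1" using prob_space.prob_le_1[OF Q_prob] .
    have pm: "(1 - \<epsilon>) ^ m \<le> (1 - \<epsilon> * measure Q R0) ^ m"
    proof (rule power_mono)
      show "1 - \<epsilon> \<le> 1 - \<epsilon> * measure Q R0" using QR0 eps by (simp add: mult_left_le)
      show "0 \<le> 1 - \<epsilon>" using e1 by simp
    qed
    have core: "tv_dist M (kstep P k \<nu>) \<pi> \<le> (1 - \<epsilon>) ^ m
     + ((c.alpha * c.Lam) ^ m * (1 + enn2real (\<integral>\<^sup>+x. ennreal (f x) \<partial>\<nu>) + b / (1 - lam)) - c.alpha ^ m) / (c.alpha ^ k - c.alpha ^ m)
     + real k * measure \<pi> (space M - R0)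
     + (\<Sum>i=1..k. measure (kstep P i \<nu>) (space M - R0))"
      by (rule c.core_bound[OF m0 mk False])
    show ?thesis unfolding Let_def
    proof (rule disjI2)
      show "tv_dist M (kstep P k \<nu>) \<pi> \<le> (1 - \<epsilon> * measure Q R0) ^ m
     + (((1 + d) / (1 + 2 * b + lam * d) * (1 + 2 * (lam * d + b))) ^ m * (1 + enn2real (\<integral>\<^sup>+x. ennreal (f x) \<partial>\<nu>) + b / (1 - lam)) - ((1 + d) / (1 + 2 * b + lam * d)) ^ m) / (((1 + d) / (1 + 2 * b + lam * d)) ^ k - ((1 + d) / (1 + 2 * b + lam * d)) ^ m)
     + real k * measure \<pi> (space M - R0)
     + (\<Sum>i=1..k. measure (kstep P i \<nu>) (space M - R0))"
        using core pm unfolding c.alpha_def c.Lam_def by linarith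
    qed
  qed
qed


end
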